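(* The map $W:\mathcal{Q}_+/\mathrm{SL}_2(\mathbb{Z})\to \{L,R\}^*_{\mathrm{prim}}/{\sim}$ given by \[ [Q]\mapsto W(Q)=L^{c_1}R^{c_2}\cdots L^{c_{2\ell-1}}R^{c_{2\ell}}, \] where $(c_1,\dots,c_{2\ell})$ is the periodic part of the continued fraction expansion $w_Q=[a_1,\dots,a_{2k},\overline{c_1,\dots,c_{2\ell}}]$ described below, is well-defined. Moreover, its image consists of all classes in $\{L,R\}^*_{\mathrm{prim}}/{\sim}$ except the classes of the two words $L$ and $R$ of length one.
   Context: $\mathcal{Q}$ is the set of integral binary quadratic forms $Q(x,y)=ax^2+bxy+cy^2$, with right action of $\mathrm{SL}_2(\mathbb{Z})$ given by $(Q\circ\gamma)(x,y)=Q(\alpha x+\beta y,\gamma x+\delta y)$ for $\gamma=\begin{pmatrix}\alpha&\beta\\ \gamma&\delta\end{pmatrix}$; $\mathcal{Q}_+$ is the set of $Q\in\mathcal{Q}$ whose discriminant $D=b^2-4ac$ is positive and not a perfect square (then $a\neq 0$). For $Q\in\mathcal{Q}_+$, $w_Q=\frac{-b+\sqrt{D}}{2a}$. Every real quadratic irrational has an eventually periodic regular continued fraction $[a_1,a_2,\dots]$ ($a_1\in\mathbb{Z}$, $a_j\in\mathbb{Z}_{>0}$ for $j\ge2$); write $w_Q=[a_1,\dots,a_{2k},\overline{c_1,\dots,c_{2\ell}}]$ with a pre-periodic part of even length $2k$ (chosen arbitrarily among valid choices) and "minimal even period" $2\ell$: if the minimal period $(c_1,\dots,c_m)$ has $m$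 even, $2\ell=m$; if $m$ is odd, the period is taken to be the doubled block $(c_1,\dots,c_m,c_1,\dots,c_m)$ and $2\ell=2m$. $\{L,R\}^*_{\mathrm{prim}}$ is the set of finite nonempty words over $\{L,R\}$ that are primitive (not a power $U^k$, $k\ge2$, of a shorter word), and $\sim$ is the equivalence relation of cyclic permutation; $L^c$ denotes $c$ consecutive copies of $L$. *)

theory Defs
  imports Complex_Main
begin

text \<open>Integral binary quadratic forms Q(x,y) = a x^2 + b x y + c y^2 as triples (a,b,c).\<close>
type_synonym qform = "int \<times> int \<times> int"

text \<open>Matrices (alpha, beta, gamma, delta) standing for [[alpha, beta],[gamma, delta]].\<close>
type_synonym mat2 = "int \<times> int \<times> int \<times> int"

definition SL2Z :: "mat2 set" where
  "SL2Z = {(al, be, ga, de). al * de - be * ga = 1}"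

definition qeval :: "qform \<Rightarrow> int \<Rightarrow> int \<Rightarrow> int" where
  "qeval Q x y = (case Q of (a, b, c) \<Rightarrow> a * x^2 + b * x * y + c * y^2)"

text \<open>Right action: (Q o g)(x,y) = Q(al x + be y, ga x + de y), expanded to coefficients.\<close>
definition qact :: "qform \<Rightarrow> mat2 \<Rightarrow> qform" where
  "qact Q g = (case Q of (a, b, c) \<Rightarrow> (case g of (al, be, ga, de) \<Rightarrow>
      (a * al^2 + b * al * ga + c * ga^2,
       2 * a * al * be + b * (al * de + be * ga) + 2 * c * ga * de,
       a * be^2 + b * be * de + c * de^2)))"

definition disc :: "qform \<Rightarrow> int" where
  "disc Q = (case Q of (a, b, c) \<Rightarrow> b^2 - 4 * a * c)"

definition Qplus :: "qform set" where
  "Qplus = {Q. disc Q > 0 \<and> \<not> (\<exists>n::int. disc Q = n^2)}"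

definition wQ :: "qform \<Rightarrow> real" where
  "wQ Q = (case Q of (a, b, c) \<Rightarrow> (- real_of_int b + sqrt (real_of_int (disc Q))) / (2 * real_of_int a))"

text \<open>Regular continued fraction: complete quotients and partial quotients.
  cf_digit x n is a_{n+1} in the notation [a_1, a_2, ...].\<close>
primrec cf_rem :: "real \<Rightarrow> nat \<Rightarrow> real" where
  "cf_rem x 0 = x"
| "cf_rem x (Suc n) = 1 / (cf_rem x n - of_int \<lfloor>cf_rem x n\<rfloor>)"

definition cf_digit :: "real \<Rightarrow> nat \<Rightarrow> int" where
  "cf_digit x n = \<lfloor>cf_rem x n\<rfloor>"

definition valid_preperiod :: "real \<Rightarrow> nat \<Rightarrow> bool" where
  "valid_preperiod x k \<longleftrightarrow> (\<exists>p>0. \<forall>j. cf_digit x (2*k + j + p) = cf_digit x (2*k + j))"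

definition min_period :: "real \<Rightarrow> nat \<Rightarrow> nat" where
  "min_period x k = (LEAST p. p > 0 \<and> (\<forall>j. cf_digit x (2*k + j + p) = cf_digit x (2*k + j)))"

definition even_period :: "real \<Rightarrow> nat \<Rightarrow> nat" where
  "even_period x k = (if even (min_period x k) then min_period x k else 2 * min_period x k)"

datatype letter = L | R

text \<open>W = L^{c_1} R^{c_2} ... L^{c_{2l-1}} R^{c_{2l}} with c_{i+1} = cf_digit x (2k + i).\<close>
definition Wword :: "qform \<Rightarrow> nat \<Rightarrow> letter list" where
  "Wword Q k = concat (map (\<lambda>i. replicate (nat (cf_digit (wQ Q) (2*k + i))) (if even i then L else R))
                           [0..<even_period (wQ Q) k])"

definition primitive_word :: "letter list \<Rightarrow> bool" where
  "primitive_word w \<longleftrightarrow> w \<noteq> [] \<and> \<not> (\<exists>u m. m \<ge> 2 \<and> w = concat (replicate m u))"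

definition cyc_equiv :: "'a list \<Rightarrow> 'a list \<Rightarrow> bool" where
  "cyc_equiv u v \<longleftrightarrow> (\<exists>n. rotate n u = v)"

end

theory Submission
  imports Defs "HOL-Computational_Algebra.Polynomial"
begin

lemma Qplus_iff: "(A,B,C) \<in> Qplus \<longleftrightarrow> B^2 - 4*A*C > 0 \<and> (\<forall>n::int. B^2 - 4*A*C \<noteq> n^2)"
  by (auto simp: Qplus_def disc_def)

lemma Qplus_A: "(A,B,C) \<in> Qplus \<Longrightarrow> A \<noteq> 0"
  by (auto simp: Qplus_iff)

lemma sqrt_nonsq_irrat:
  assumes "\<forall>n::int. D \<noteq> n^2" "D \<ge> 0"
  shows "sqrt (real_of_int D) \<notin> \<rat>"
proof
  assume r: "sqrt (real_of_int D) \<in> \<rat>"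
  have "algebraic_int (sqrt (real_of_int D))" by (intro algebraic_int_sqrt int_imp_algebraic_int) auto
  with r have "sqrt (real_of_int D) \<in> \<int>" using rational_algebraic_int_is_int by blast
  then obtain n where n: "sqrt (real_of_int D) = of_int n" by (auto elim: Ints_cases)
  hence "real_of_int D = (of_int n)^2" using assms(2) by (metis of_int_0_le_iff real_sqrt_pow2)
  hence "D = n^2" by (metis of_int_eq_iff of_int_power)
  with assms(1) show False by blast
qed

definition wb :: "qform \<Rightarrow> real" where
  "wb Q = (case Q of (a, b, c) \<Rightarrow> (- real_of_int b - sqrt (real_of_int (disc Q))) / (2 * real_of_int a))"

definition stp :: "int \<Rightarrow> qform \<Rightarrow> qform" where
  "stp a Q = (case Q of (A,B,C) \<Rightarrow> (-(A*a^2+B*a+C), -(2*A*a+B), -A))"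

lemma disc_stp: "disc (stp a Q) = disc Q"
  by (cases Q) (auto simp: stp_def disc_def power2_eq_square algebra_simps)

lemma stp_Qplus: "Q \<in> Qplus \<Longrightarrow> stp a Q \<in> Qplus"
  by (simp add: Qplus_def disc_stp)

lemma stp_A_nz:
  assumes "Q \<in> Qplus" shows "fst (stp a Q) \<noteq> 0"
proof -
  obtain A B C where Q: "Q = (A,B,C)" by (cases Q)
  show ?thesis
  proof
    assume "fst (stp a Q) = 0"
    hence "A*a^2+B*a+C = 0" by (simp add: Q stp_def)
    hence "B^2 - 4*A*C = (2*A*a+B)^2" by (simp add: power2_eq_square algebra_simps) (smt (verit) mult.commute ring_class.ring_distribs(1))
    with assms show False by (auto simp: Q Qplus_iff)
  qed
qed

lemma w_stp:
  assumes "Q \<in> Qplus"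
  shows "(wQ Q - of_int a) * wQ (stp a Q) = 1" "(wb Q - of_int a) * wb (stp a Q) = 1"
proof -
  obtain A B C where Q: "Q = (A,B,C)" by (cases Q)
  have A: "A \<noteq> 0" using assms Q Qplus_A by blast
  have A': "A*a^2+B*a+C \<noteq> 0" using stp_A_nz[OF assms, of a] by (simp add: Q stp_def)
  define s where "s = sqrt (real_of_int (B^2-4*A*C))"
  have D: "B^2 - 4*A*C > 0" using assms by (simp add: Q Qplus_iff)
  have D0: "real_of_int (B^2-4*A*C) \<ge> 0" using D by linarith
  have s2: "s^2 = real_of_int B^2 - 4*real_of_int A*real_of_int C" unfolding s_def using D0 by simp
  have ds: "disc (stp a Q) = B^2-4*A*C" using disc_stp[of a Q] by (simp add: Q disc_def)
  have e1: "wQ Q = (- real_of_int B + s)/(2*real_of_int A)" by (simp add: wQ_def Q disc_def s_def)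
  have e2: "wQ (stp a Q) = (real_of_int (2*A*a+B) + s)/(2*(-real_of_int (A*a^2+B*a+C)))"
    using ds by (simp add: wQ_def stp_def Q s_def)
  have e3: "wb Q = (- real_of_int B - s)/(2*real_of_int A)" by (simp add: wb_def Q disc_def s_def)
  have e4: "wb (stp a Q) = (real_of_int (2*A*a+B) - s)/(2*(-real_of_int (A*a^2+B*a+C)))"
    using ds by (simp add: wb_def stp_def Q s_def)
  have Ar: "real_of_int A \<noteq> 0" using A by simp
  have Ar': "real_of_int A * (of_int a)^2 + of_int B * of_int a + of_int C \<noteq> 0"
    using A' by (metis of_int_add of_int_eq_0_iff of_int_mult of_int_power)
  define E where "E = real_of_int B + 2*real_of_int A*real_of_int a"
  define K where "K = real_of_int A * (of_int a)^2 + of_int B * of_int a + of_int C"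
  have K: "K \<noteq> 0" using Ar' by (simp add: K_def)
  have e2': "wQ (stp a Q) = (E + s)/(-2*K)" unfolding e2 E_def K_def by simp
  have e4': "wb (stp a Q) = (E - s)/(-2*K)" unfolding e4 E_def K_def by simp
  have e1': "wQ Q - of_int a = (s - E)/(2*real_of_int A)" unfolding e1 E_def using Ar by (simp add: field_simps)
  have e3': "wb Q - of_int a = (-s - E)/(2*real_of_int A)" unfolding e3 E_def using Ar by (simp add: field_simps)
  have p1: "(s - E)*(E + s) = (2*real_of_int A)*(-2*K)" unfolding E_def K_def using s2
    by (simp add: power2_eq_square algebra_simps)
  have p2: "(-s - E)*(E - s) = (2*real_of_int A)*(-2*K)" unfolding E_def K_def using s2
    by (simp add: power2_eq_square algebra_simps)
  show "(wQ Q - of_int a) * wQ (stp a Q) = 1"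
    unfolding e1' e2' using p1 Ar K by (simp add: field_simps)
  show "(wb Q - of_int a) * wb (stp a Q) = 1"
    unfolding e3' e4' using p2 Ar K by (simp add: field_simps)
qed


lemma prod1: "(u::real) * v = 1 \<Longrightarrow> v = 1 / u"
  by (metis divide_eq_eq mult.commute mult_zero_left zero_neq_one)

lemma cf_rem_add: "cf_rem x (m + n) = cf_rem (cf_rem x m) n"
  by (induction n) auto

primrec qs :: "qform \<Rightarrow> nat \<Rightarrow> qform" where
  "qs Q 0 = Q"
| "qs Q (Suc n) = stp \<lfloor>wQ (qs Q n)\<rfloor> (qs Q n)"

declare qs.simps(2)[simp del]

lemma qs_shift: "qs Q i = qs Q j \<Longrightarrow> qs Q (i + t) = qs Q (j + t)"
  by (induction t) (auto simp: qs.simps(2))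

lemma wQ_disc_A:
  assumes "(A,B,C) \<in> Qplus"
  shows "(wQ (A,B,C) - wb (A,B,C)) * real_of_int A = sqrt (real_of_int (B^2-4*A*C))"
        "wQ (A,B,C) * wb (A,B,C) * real_of_int A = real_of_int C"
        "sqrt (real_of_int (B^2-4*A*C)) > 0"
proof -
  have A: "A \<noteq> 0" using Qplus_A assms by blast
  have D: "B^2 - 4*A*C > 0" using assms by (simp add: Qplus_iff)
  define s where "s = sqrt (real_of_int (B^2-4*A*C))"
  have D0: "real_of_int (B^2-4*A*C) > 0" using D by linarith
  have s2: "s^2 = real_of_int B^2 - 4*real_of_int A*real_of_int C" unfolding s_def using D0 by simp
  have e1: "wQ (A,B,C) = (- real_of_int B + s)/(2*real_of_int A)" by (simp add: wQ_def disc_def s_def)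
  have e3: "wb (A,B,C) = (- real_of_int B - s)/(2*real_of_int A)" by (simp add: wb_def disc_def s_def)
  show "(wQ (A,B,C) - wb (A,B,C)) * real_of_int A = s" unfolding e1 e3 using A by (simp add: field_simps)
  have "(- real_of_int B + s) * (- real_of_int B - s) = 4 * real_of_int A * real_of_int C"
    using s2 by (simp add: power2_eq_square algebra_simps)
  then show "wQ (A,B,C) * wb (A,B,C) * real_of_int A = real_of_int C" unfolding e1 e3 using A
    by (simp add: field_simps)
  show "s > 0" unfolding s_def using D0 by simp
qed

lemma reduced_bound:
  assumes "(A,B,C) \<in> Qplus" "wQ (A,B,C) > 1" "wb (A,B,C) > -1" "wb (A,B,C) < 0"
  shows "\<bar>A\<bar> \<le> B^2-4*A*C \<and> \<bar>B\<bar> \<le> B^2-4*A*C \<and> \<bar>C\<bar> \<le> B^2-4*A*C"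
proof -
  note h = wQ_disc_A[OF assms(1)]
  define s where "s = sqrt (real_of_int (B^2-4*A*C))"
  define x where "x = wQ (A,B,C)"
  define y where "y = wb (A,B,C)"
  have h1: "(x - y) * A = s" and h2: "x*y*A = C" and h3: "s > 0" using h by (auto simp: s_def x_def y_def)
  have D: "B^2 - 4*A*C > 0" using assms by (simp add: Qplus_iff)
  have D0: "real_of_int (B^2-4*A*C) > 0" using D by linarith
  have s2: "s^2 = real_of_int (B^2-4*A*C)" unfolding s_def using D0 by simp
  have xy: "x - y > 1" using assms by (simp add: x_def y_def)
  have Ap: "real_of_int A > 0" using h1 h3 xy zero_less_mult_pos[of "x-y" "real_of_int A"] by simp
  have "1 * real_of_int A < (x-y) * real_of_int A" using xy Ap by (intro mult_strict_right_mono) auto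
  hence As: "real_of_int A < s" using h1 by simp
  have "real_of_int A * real_of_int A < s * s" using As Ap by (simp add: mult_strict_mono)
  hence "real_of_int (A*A) < real_of_int (B^2-4*A*C)" using s2 by (simp add: power2_eq_square)
  hence AA: "A*A < B^2-4*A*C" by linarith
  have A1: "A \<ge> 1" using Ap by simp
  have "x*y < 0" using assms xy by (simp add: x_def y_def mult_pos_neg)
  hence "real_of_int C < 0" using h2 Ap by (metis mult_neg_pos)
  hence C: "C < 0" by simp
  have "A \<le> A*A" using A1 by (simp add: mult_le_cancel_left1)
  hence bA: "\<bar>A\<bar> \<le> B^2-4*A*C" using AA A1 by linarith
  have "A*C < 0" using A1 C by (simp add: mult_pos_neg)
  hence "B^2 < B^2-4*A*C" by linarith
  moreover have "\<bar>B\<bar> \<le> B^2"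
  proof (cases "B = 0")
    case False
    hence "\<bar>B\<bar> * 1 \<le> \<bar>B\<bar> * \<bar>B\<bar>" by (intro mult_left_mono) auto
    thus ?thesis by (simp add: power2_eq_square)
  qed simp
  ultimately have bB: "\<bar>B\<bar> \<le> B^2-4*A*C" by linarith
  have "1 * (-C) \<le> A * (-C)" using A1 C by (intro mult_right_mono) auto
  hence "-C \<le> -(A*C)" by simp
  moreover have "B^2 \<ge> 0" by simp
  ultimately have bC: "\<bar>C\<bar> \<le> B^2-4*A*C" using C by linarith
  show ?thesis using bA bB bC by blast
qed

context
  fixes Q :: qform
  assumes Q: "Q \<in> Qplus"
begin

lemma qs_Qplus: "qs Q n \<in> Qplus"
  by (induction n) (auto simp: Q stp_Qplus qs.simps(2))

lemma qs_rem: "cf_rem (wQ Q) n = wQ (qs Q n)"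
proof (induction n)
  case (Suc n)
  have "(wQ (qs Q n) - of_int \<lfloor>wQ (qs Q n)\<rfloor>) * wQ (qs Q (Suc n)) = 1"
    using w_stp(1)[OF qs_Qplus] by (simp add: qs.simps(2))
  then show ?case using Suc prod1 by (simp add: qs.simps(2))
qed simp

abbreviation "X n \<equiv> wQ (qs Q n)"
abbreviation "Y n \<equiv> wb (qs Q n)"
abbreviation "ad n \<equiv> \<lfloor>X n\<rfloor>"

lemma X_nonint: "X n \<noteq> of_int m"
  using w_stp(1)[OF qs_Qplus, of n m] by auto

lemma Y_nonint: "Y n \<noteq> of_int m"
  using w_stp(2)[OF qs_Qplus, of n m] by auto

lemma X_Suc: "X (Suc n) = 1 / (X n - ad n)"
  using prod1[OF w_stp(1)[OF qs_Qplus, of n "ad n"]] by (simp add: qs.simps(2))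

lemma Y_Suc: "Y (Suc n) = 1 / (Y n - ad n)"
  using prod1[OF w_stp(2)[OF qs_Qplus, of n "ad n"]] by (simp add: qs.simps(2))

lemma frac_X: "0 < X n - ad n" "X n - ad n < 1"
proof -
  have "X n \<noteq> of_int (ad n)" by (rule X_nonint)
  moreover have "of_int (ad n) \<le> X n" by simp
  ultimately show "0 < X n - ad n" by linarith
  show "X n - ad n < 1" by linarith
qed

lemma X_gt1: "X (Suc n) > 1"
  using frac_X[of n] by (simp add: X_Suc)

lemma ad_ge1: "n \<ge> 1 \<Longrightarrow> ad n \<ge> 1"
  using X_gt1[of "n-1"] by (cases n) auto

lemma ad_ge1': "n \<ge> 1 \<Longrightarrow> 1 \<le> real_of_int (ad n)"
  using ad_ge1 by (metis of_int_1 of_int_le_iff)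

lemma X_rec: "X (Suc n) - ad (Suc n) = 1 / X (Suc (Suc n))"
  using X_Suc[of "Suc n"] frac_X[of "Suc n"] by simp

lemma X_pair: "X (Suc n) * X (Suc (Suc n)) > 2"
proof -
  have x2: "X (Suc (Suc n)) > 1" by (rule X_gt1)
  have "X (Suc n) = ad (Suc n) + 1 / X (Suc (Suc n))" using X_rec[of n] by simp
  hence "X (Suc n) * X (Suc (Suc n)) = ad (Suc n) * X (Suc (Suc n)) + 1" using x2
    by (simp add: field_simps)
  moreover have "ad (Suc n) * X (Suc (Suc n)) > 1"
  proof -
    have "X (Suc (Suc n)) \<le> ad (Suc n) * X (Suc (Suc n))" using mult_right_mono[OF ad_ge1'[of "Suc n"], of "X (Suc (Suc n))"] x2
      by simp
    thus ?thesis using x2 by linarith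
  qed
  ultimately show ?thesis by simp
qed

lemma Y_neg_exists: "\<exists>N\<ge>1. Y N < 0"
proof (rule ccontr)
  assume "\<not> ?thesis"
  hence nn: "\<And>n. n \<ge> 1 \<Longrightarrow> Y n \<ge> 0" by force
  have pos: "Y n > 0" if "n \<ge> 1" for n using nn[OF that] Y_nonint[of n 0] by simp
  have lo: "Y n > ad n" if "n \<ge> 1" for n
  proof -
    have "Y (Suc n) > 0" using pos[of "Suc n"] by simp
    hence "1 / (Y n - ad n) > 0" by (simp add: Y_Suc)
    thus ?thesis by (simp add: zero_less_divide_1_iff)
  qed
  have hi: "Y n < ad n + 1" if "n \<ge> 1" for n
  proof -
    have "Y (Suc n) > 1" using lo[of "Suc n"] ad_ge1'[of "Suc n"] by linarith
    hence "1 / (Y n - ad n) > 1" by (simp add: Y_Suc)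
    moreover have "Y n - ad n > 0" using lo[OF that] by simp
    ultimately show ?thesis by (simp add: less_divide_eq)
  qed
  have Yrec: "Y n - ad n = 1 / Y (Suc n)" if "n \<ge> 1" for n
    using Y_Suc[of n] lo[OF that] by simp
  have Y_pair: "Y (Suc n) * Y (Suc (Suc n)) > 2" for n
  proof -
    have y2: "Y (Suc (Suc n)) > 1" using lo[of "Suc (Suc n)"] ad_ge1'[of "Suc (Suc n)"] by linarith
    have "Y (Suc n) = ad (Suc n) + 1 / Y (Suc (Suc n))" using Yrec[of "Suc n"] by simp
    hence "Y (Suc n) * Y (Suc (Suc n)) = ad (Suc n) * Y (Suc (Suc n)) + 1" using y2
      by (simp add: field_simps)
    moreover have "ad (Suc n) * Y (Suc (Suc n)) > 1"
    proof -
      have "Y (Suc (Suc n)) \<le> ad (Suc n) * Y (Suc (Suc n))" using mult_right_mono[OF ad_ge1'[of "Suc n"], of "Y (Suc (Suc n))"] y2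
        by simp
      thus ?thesis using y2 by linarith
    qed
    ultimately show ?thesis by simp
  qed
  define d where "d n = \<bar>X n - Y n\<bar>" for n
  have d_lt1: "d n < 1" if "n \<ge> 1" for n
    using lo[OF that] hi[OF that] frac_X[of n] unfolding d_def by linarith
  have dstep: "X (Suc n) - Y (Suc n) = (Y n - X n) * (X (Suc n) * Y (Suc n))" if "n \<ge> 1" for n
  proof -
    have a: "X n - ad n \<noteq> 0" "Y n - ad n \<noteq> 0" using frac_X[of n] lo[OF that] by auto
    show ?thesis unfolding X_Suc Y_Suc using a by (simp add: field_simps)
  qed
  have d2: "d (Suc (Suc n)) \<ge> 2 * d n" if "n \<ge> 1" for n
  proof -
    have "X (Suc (Suc n)) - Y (Suc (Suc n)) = (X n - Y n) * ((X (Suc n) * X (Suc (Suc n))) * (Y (Suc n) * Y (Suc (Suc n))))"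
    proof -
      have h1: "X (Suc (Suc n)) - Y (Suc (Suc n)) = (Y (Suc n) - X (Suc n)) * (X (Suc (Suc n)) * Y (Suc (Suc n)))"
        using dstep[of "Suc n"] by simp
      have h2: "Y (Suc n) - X (Suc n) = (X n - Y n) * (X (Suc n) * Y (Suc n))"
        using dstep[OF that] by (simp add: algebra_simps)
      show ?thesis unfolding h1 h2 by (simp add: mult_ac)
    qed
    hence "d (Suc (Suc n)) = d n * ((X (Suc n) * X (Suc (Suc n))) * (Y (Suc n) * Y (Suc (Suc n))))"
    proof -
      have Pp: "(X (Suc n) * X (Suc (Suc n))) * (Y (Suc n) * Y (Suc (Suc n))) > 0"
      proof -
        have "0 < X (Suc n) * X (Suc (Suc n))" "0 < Y (Suc n) * Y (Suc (Suc n))" using X_pair[of n] Y_pair[of n] by linarith+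
        thus ?thesis by (rule mult_pos_pos)
      qed
      show ?thesis unfolding d_def using \<open>X (Suc (Suc n)) - Y (Suc (Suc n)) = _\<close> Pp by (metis abs_mult abs_of_pos)
    qed
    moreover have "(X (Suc n) * X (Suc (Suc n))) * (Y (Suc n) * Y (Suc (Suc n))) \<ge> 2"
    proof -
      have "2 * 2 < (X (Suc n) * X (Suc (Suc n))) * (Y (Suc n) * Y (Suc (Suc n)))"
        using X_pair[of n] Y_pair[of n] by (intro mult_strict_mono) auto
      thus ?thesis by simp
    qed
    moreover have "d n \<ge> 0" by (simp add: d_def)
    ultimately show ?thesis by (metis mult.commute mult_left_mono)
  qed
  have dpow: "d (1 + 2*m) \<ge> 2^m * d 1" for m
  proof (induction m)
    case (Suc m)
    have "d (1 + 2 * Suc m) = d (Suc (Suc (1 + 2*m)))" by simp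
    also have "\<dots> \<ge> 2 * d (1 + 2*m)" by (rule d2) simp
    finally show ?case using Suc by simp
  qed simp
  have d1: "d 1 > 0"
  proof -
    obtain A B C where qq: "qs Q 1 = (A,B,C)" by (cases "qs Q 1")
    have "(X 1 - Y 1) * real_of_int A = sqrt (real_of_int (B^2-4*A*C))" "sqrt (real_of_int (B^2-4*A*C)) > 0"
      using wQ_disc_A[of A B C] qs_Qplus[of 1] qq by auto
    hence "X 1 \<noteq> Y 1" by auto
    thus ?thesis by (simp add: d_def)
  qed
  obtain m where m: "1 / d 1 < 2^m" using real_arch_pow[of 2 "1 / d 1"] by auto
  have "1 < 2^m * d 1" using m d1 by (simp add: divide_less_eq)
  also have "\<dots> \<le> d (1 + 2*m)" by (rule dpow)
  finally show False using d_lt1[of "1+2*m"] by simp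
qed

lemma Y_neg_later: "Y N < 0 \<Longrightarrow> N \<ge> 1 \<Longrightarrow> Y (N + t) < 0 \<and> (t \<ge> 1 \<longrightarrow> Y (N + t) > -1)"
proof (induction t)
  case (Suc t)
  have "Y (N+t) < 0" using Suc by simp
  moreover have "ad (N+t) \<ge> 1" using ad_ge1' Suc by simp
  ultimately have "Y (N+t) - ad (N+t) < -1" by linarith
  hence "1 / (Y (N+t) - ad (N+t)) < 0 \<and> 1 / (Y (N+t) - ad (N+t)) > -1"
    by (auto simp: divide_less_eq less_divide_eq)
  thus ?case by (simp add: Y_Suc)
qed simp

lemma lagrange: "\<exists>k. valid_preperiod (wQ Q) k"
proof -
  obtain N where N: "N \<ge> 1" "Y N < 0" using Y_neg_exists by blast
  obtain A0 B0 C0 where Q0: "Q = (A0,B0,C0)" by (cases Q)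
  define D where "D = B0^2 - 4*A0*C0"
  have discq: "disc (qs Q n) = D" for n
  proof (induction n)
    case (Suc n) then show ?case by (simp add: disc_stp qs.simps(2))
  qed (simp add: Q0 D_def disc_def)
  define f where "f n = qs Q (N + 1 + n)" for n
  let ?box = "{-D..D} \<times> {-D..D} \<times> {-D..D}"
  have inbox: "f n \<in> ?box" for n
  proof -
    obtain A B C where qq: "qs Q (N+1+n) = (A,B,C)" by (cases "qs Q (N+1+n)")
    have y: "Y (N + (1+n)) < 0 \<and> Y (N + (1+n)) > -1" using Y_neg_later[OF N(2) N(1), of "1+n"] by simp
    have x: "X (Suc (N+n)) > 1" by (rule X_gt1)
    have "\<bar>A\<bar> \<le> B^2-4*A*C \<and> \<bar>B\<bar> \<le> B^2-4*A*C \<and> \<bar>C\<bar> \<le> B^2-4*A*C"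
      apply (rule reduced_bound)
      using qs_Qplus[of "N+1+n"] qq y x by (auto simp: add_ac)
    moreover have "B^2-4*A*C = D" using discq[of "N+1+n"] qq by (simp add: disc_def)
    ultimately show ?thesis using qq by (auto simp: f_def abs_le_iff)
  qed
  have "finite (range f)" by (rule finite_subset[of _ ?box]) (use inbox in blast, simp)
  hence "\<not> inj f" using finite_imageD infinite_UNIV_nat by blast
  then obtain i j where ij: "f i = f j" "i \<noteq> j" unfolding inj_def by blast
  then obtain i j where ij: "f i = f j" "i < j" by (metis linorder_neqE_nat)
  define p where "p = j - i"
  have per: "cf_rem (wQ Q) (N+1+i+t) = cf_rem (wQ Q) (N+1+i+t+p)" for t
  proof -
    have "qs Q (N+1+i+t) = qs Q (N+1+j+t)" using qs_shift[of Q "N+1+i" "N+1+j" t] ij by (simp add: f_def)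
    moreover have "N+1+j+t = N+1+i+t+p" using ij by (simp add: p_def)
    ultimately show ?thesis using qs_rem by metis
  qed
  have "valid_preperiod (wQ Q) (N+1+i)"
    unfolding valid_preperiod_def
  proof (intro exI[of _ p] conjI allI)
    show "p > 0" using ij by (simp add: p_def)
    fix t
    show "cf_digit (wQ Q) (2 * (N + 1 + i) + t + p) = cf_digit (wQ Q) (2 * (N + 1 + i) + t)"
    proof -
      have e1: "2*(N+1+i)+t+p = N+1+i+(N+1+i+t)+p" "2*(N+1+i)+t = N+1+i+(N+1+i+t)" by simp_all
      show ?thesis unfolding cf_digit_def e1 using per[of "N+1+i+t"] by metis
    qed
  qed
  thus ?thesis by blast
qed

end


definition lt :: "nat \<Rightarrow> letter" where "lt i = (if even i then L else R)"

definition blk :: "(nat \<Rightarrow> int) \<Rightarrow> nat \<Rightarrow> nat \<Rightarrow> letter list" where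
  "blk c z n = concat (map (\<lambda>i. replicate (nat (c i)) (lt i)) [z..<z+n])"

lemma blk_0[simp]: "blk c z 0 = []" by (simp add: blk_def)

lemma blk_Suc: "blk c z (Suc n) = replicate (nat (c z)) (lt z) @ blk c (Suc z) n"
proof -
  have "[z..<z + Suc n] = z # [Suc z..<Suc z + n]" by (simp add: upt_conv_Cons)
  thus ?thesis by (simp add: blk_def)
qed

lemma blk_add: "blk c z (a + b) = blk c z a @ blk c (z + a) b"
proof -
  have "[z..<z + (a + b)] = [z..<z+a] @ [z+a..<z+a+b]" using upt_add_eq_append[of z "z+a" b] by (simp add: add.assoc)
  thus ?thesis by (simp add: blk_def add.assoc)
qed

lemma blk_cong: "(\<And>i. z \<le> i \<Longrightarrow> i < z + n \<Longrightarrow> c i = d i) \<Longrightarrow> blk c z n = blk d z n"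
  unfolding blk_def by (intro arg_cong[where f=concat] map_cong) auto

lemma lt_shift: "even s \<Longrightarrow> lt (i + s) = lt i"
  by (simp add: lt_def)

lemma blk_shift: "even s \<Longrightarrow> blk (\<lambda>i. c (i + s)) z n = blk c (z + s) n"
proof (induction n arbitrary: z)
  case (Suc n)
  show ?case using Suc by (simp add: blk_Suc lt_shift)
qed simp

definition per :: "(nat \<Rightarrow> int) \<Rightarrow> nat \<Rightarrow> bool" where
  "per c p \<longleftrightarrow> (\<forall>j. c (j + p) = c j)"

lemma per_mult: "per c p \<Longrightarrow> c (j + q * p) = c j"
proof (induction q)
  case (Suc q)
  have "c (j + Suc q * p) = c ((j + q * p) + p)" by (simp add: algebra_simps)
  also have "\<dots> = c (j + q*p)" using Suc.prems by (simp add: per_def)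
  finally show ?case using Suc by simp
qed simp

lemma per_mod: "per c p \<Longrightarrow> c j = c (j mod p)"
  using per_mult[of c p "j mod p" "j div p"] by simp

lemma blk_per: "per c P \<Longrightarrow> even P \<Longrightarrow> blk c (z + P) n = blk c z n"
proof -
  assume a: "per c P" "even P"
  have "blk c (z + P) n = blk (\<lambda>i. c (i + P)) z n" using blk_shift[OF a(2)] by simp
  also have "\<dots> = blk c z n" using a(1) by (simp add: per_def)
  finally show ?thesis .
qed

lemma blk_power: "per c P \<Longrightarrow> even P \<Longrightarrow> blk c 0 (r * P) = concat (replicate r (blk c 0 P))"
proof (induction r)
  case (Suc r)
  have "blk c 0 (Suc r * P) = blk c 0 (P + r * P)" by (simp add: add.commute)
  also have "\<dots> = blk c 0 P @ blk c P (r * P)" by (simp add: blk_add)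
  also have "blk c P (r * P) = blk c 0 (r * P)" using blk_per[OF Suc.prems, of 0] by simp
  finally show ?case using Suc by simp
qed simp

lemma blk_ne_hd:
  assumes "\<forall>i. c i \<ge> 1" "n > 0"
  shows "blk c z n \<noteq> [] \<and> hd (blk c z n) = lt z \<and> blk c z n ! 0 = lt z"
proof -
  obtain m where n: "n = Suc m" using assms(2) by (cases n) auto
  have "nat (c z) > 0" using assms(1)[rule_format, of z] by simp
  then obtain a where "nat (c z) = Suc a" by (cases "nat (c z)") auto
  thus ?thesis by (simp add: n blk_Suc)
qed

lemma blk_last:
  assumes "\<forall>i. c i \<ge> 1" "n > 0"
  shows "last (blk c z n) = lt (z + n - 1)"
proof -
  obtain m where n: "n = m + 1" using assms(2) by (cases n) auto
  have "blk c z n = blk c z m @ blk c (z + m) 1" unfolding n by (rule blk_add)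
  moreover have "blk c (z+m) 1 = replicate (nat (c (z+m))) (lt (z+m))" by (simp add: blk_Suc)
  moreover have "nat (c (z+m)) > 0" using assms(1)[rule_format, of "z+m"] by simp
  ultimately show ?thesis by (simp add: n)
qed

lemma length_blk2: "length (blk c z 2) = nat (c z) + nat (c (Suc z))"
  by (simp add: numeral_2_eq_2 blk_Suc)

lemma blk_inj:
  assumes "\<forall>i. c i \<ge> 1" "\<forall>i. d i \<ge> 1" "blk c z n = blk d z n"
  shows "\<forall>i. z \<le> i \<and> i < z + n \<longrightarrow> c i = d i"
  using assms(3)
proof (induction n arbitrary: z)
  case (Suc n)
  let ?x = "lt z"
  have eq: "replicate (nat (c z)) ?x @ blk c (Suc z) n = replicate (nat (d z)) ?x @ blk d (Suc z) n"
    using Suc.prems by (simp add: blk_Suc)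
  have tw: "takeWhile (\<lambda>y. y = ?x) (replicate k ?x @ blk e (Suc z) n) = replicate k ?x"
    if "\<forall>i. e i \<ge> 1" for k e
  proof (cases "n = 0")
    case True then show ?thesis by simp
  next
    case False
    have "hd (blk e (Suc z) n) = lt (Suc z)" "blk e (Suc z) n \<noteq> []" using blk_ne_hd[OF that] False by auto
    moreover have "lt (Suc z) \<noteq> lt z" by (simp add: lt_def)
    ultimately obtain y ys where "blk e (Suc z) n = y # ys" "y \<noteq> lt z" by (metis list.collapse)
    thus ?thesis by (subst takeWhile_append2) auto
  qed
  have "replicate (nat (c z)) ?x = replicate (nat (d z)) ?x"
    using arg_cong[OF eq, of "takeWhile (\<lambda>y. y = ?x)"] tw[OF assms(1)] tw[OF assms(2)] by simp
  hence co: "nat (c z) = nat (d z)" by simp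
  hence co': "c z = d z" using assms(1,2) by (metis nat_eq_iff2 order.trans zero_le_one)
  have "blk c (Suc z) n = blk d (Suc z) n" using eq co by simp
  from Suc.IH[OF this] co' show ?case by (metis Suc_leI add_Suc_right le_neq_implies_less plus_nat.simps(2) add_Suc)
qed simp

definition minp :: "(nat \<Rightarrow> int) \<Rightarrow> nat" where
  "minp c = (LEAST p. p > 0 \<and> per c p)"

definition evp :: "(nat \<Rightarrow> int) \<Rightarrow> nat" where
  "evp c = (if even (minp c) then minp c else 2 * minp c)"

lemma minp_props:
  assumes "p > 0" "per c p"
  shows "minp c > 0" "per c (minp c)" "minp c \<le> p"
proof -
  have "minp c > 0 \<and> per c (minp c)" unfolding minp_def by (rule LeastI[of _ p]) (use assms in auto)
  thus "minp c > 0" "per c (minp c)" by auto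
  show "minp c \<le> p" unfolding minp_def by (rule Least_le) (use assms in auto)
qed

lemma per_mod_period:
  assumes "per c p" "per c m" "m > 0"
  shows "per c (p mod m)"
  unfolding per_def
proof
  fix j
  have "c (j + p mod m + (p div m) * m) = c (j + p mod m)" by (rule per_mult[OF assms(2)])
  moreover have "j + p mod m + (p div m) * m = j + p" by simp
  moreover have "c (j + p) = c j" using assms(1) by (simp add: per_def)
  ultimately show "c (j + p mod m) = c j" by simp
qed

lemma minp_dvd:
  assumes "p > 0" "per c p"
  shows "minp c dvd p"
proof (rule ccontr)
  assume nd: "\<not> minp c dvd p"
  have m: "minp c > 0" "per c (minp c)" using minp_props[OF assms] by auto
  have "per c (p mod minp c)" by (rule per_mod_period[OF assms(2) m(2) m(1)])
  moreover have "p mod minp c > 0" using nd by (simp add: dvd_eq_mod_eq_0)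
  ultimately have "minp c \<le> p mod minp c" unfolding minp_def by (intro Least_le) auto
  moreover have "p mod minp c < minp c" using m(1) by simp
  ultimately show False by simp
qed

lemma per_mul2: assumes "per c p" shows "per c (q * p)"
  unfolding per_def using per_mult[OF assms] by blast

lemma evp_props:
  assumes "p > 0" "per c p"
  shows "evp c > 0" "even (evp c)" "per c (evp c)"
  using minp_props[OF assms] per_mul2[of c "minp c" 2] by (auto simp: evp_def)

lemma evp_dvd:
  assumes "p > 0" "per c p" "even p"
  shows "evp c dvd p"
proof -
  have d: "minp c dvd p" by (rule minp_dvd[OF assms(1,2)])
  show ?thesis
  proof (cases "even (minp c)")
    case True then show ?thesis using d by (simp add: evp_def)
  next
    case False
    have "coprime 2 (minp c)" using False by (simp add: coprime_commute)
    hence "2 * minp c dvd p" using d assms(3) by (simp add: divides_mult)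
    then show ?thesis using False by (simp add: evp_def)
  qed
qed

lemma evp_le: "p > 0 \<Longrightarrow> per c p \<Longrightarrow> even p \<Longrightarrow> evp c \<le> p"
  using evp_dvd by (simp add: dvd_imp_le)


lemma rotate1_pow: "rotate1 (concat (replicate m v)) = concat (replicate m (rotate1 v))"
proof (cases v)
  case Nil then show ?thesis by simp
next
  case (Cons x v')
  have aux: "concat (replicate m (x#v')) @ [x] = x # concat (replicate m (v'@[x]))" for m
    by (induction m) auto
  show ?thesis
  proof (cases m)
    case 0 then show ?thesis by simp
  next
    case (Suc m')
    show ?thesis using aux[of m'] by (simp add: Cons Suc)
  qed
qed

lemma rotate_pow: "rotate n (concat (replicate m v)) = concat (replicate m (rotate n v))"
proof (induction n)
  case (Suc n)
  have "rotate (Suc n) (concat (replicate m v)) = rotate1 (rotate n (concat (replicate m v)))"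
    by (simp add: rotate_def)
  also have "\<dots> = concat (replicate m (rotate1 (rotate n v)))" using Suc rotate1_pow by simp
  finally show ?case by (simp add: rotate_def)
qed simp

lemma rotate_inv: "\<exists>m. rotate m (rotate n xs) = xs"
proof -
  have "rotate (length xs * n - n) (rotate n xs) = rotate (length xs * n - n + n) xs" by (simp add: rotate_rotate)
  also have "\<dots> = xs"
  proof (cases "xs = []")
    case False
    hence "length xs * n - n + n = length xs * n" by (simp add: Suc_le_eq)
    moreover have "rotate (length xs * n) xs = xs" by (simp add: rotate_conv_mod[of "length xs * n"])
    ultimately show ?thesis by simp
  qed simp
  finally show ?thesis by blast
qed

lemma cyc_sym: "cyc_equiv u v \<Longrightarrow> cyc_equiv v u"
  unfolding cyc_equiv_def using rotate_inv by blast

lemma cyc_trans: "cyc_equiv u v \<Longrightarrow> cyc_equiv v w \<Longrightarrow> cyc_equiv u w"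
proof -
  assume "cyc_equiv u v" "cyc_equiv v w"
  then obtain a b where "rotate a u = v" "rotate b v = w" unfolding cyc_equiv_def by blast
  hence "rotate (b + a) u = w" by (metis rotate_rotate)
  thus ?thesis unfolding cyc_equiv_def by blast
qed

lemma cyc_refl: "cyc_equiv u u"
  unfolding cyc_equiv_def by (intro exI[of _ 0]) simp

lemma cyc_length: "cyc_equiv u v \<Longrightarrow> length u = length v"
  unfolding cyc_equiv_def by auto

lemma primitive_rotate:
  assumes "primitive_word w" shows "primitive_word (rotate n w)"
  unfolding primitive_word_def
proof (intro conjI notI)
  show "rotate n w = [] \<Longrightarrow> False" using assms by (simp add: primitive_word_def)
  assume "\<exists>u m. 2 \<le> m \<and> rotate n w = concat (replicate m u)"
  then obtain u m where um: "m \<ge> 2" "rotate n w = concat (replicate m u)" by blast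
  obtain k where "rotate k (rotate n w) = w" using rotate_inv by blast
  hence "w = concat (replicate m (rotate k u))" using um by (simp add: rotate_pow)
  with um(1) assms show False by (auto simp: primitive_word_def)
qed

lemma primitive_cyc: "primitive_word w \<Longrightarrow> cyc_equiv w v \<Longrightarrow> primitive_word v"
  unfolding cyc_equiv_def using primitive_rotate by blast

lemma rotate_self_pow: "rotate (length u) (concat (replicate m u)) = concat (replicate m u)"
  by (simp add: rotate_pow)

lemma split_point:
  assumes pos: "\<forall>i. c i \<ge> 1"
  shows "0 < n \<Longrightarrow> n < length (blk c z N) \<Longrightarrow> blk c z N ! (n - 1) \<noteq> blk c z N ! n \<Longrightarrow>
    \<exists>s. 0 < s \<and> s < N \<and> n = length (blk c z s) \<and> blk c z N ! n = lt (z + s)"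
proof (induction N arbitrary: z n)
  case 0 then show ?case by simp
next
  case (Suc N)
  define a where "a = nat (c z)"
  define rest where "rest = blk c (Suc z) N"
  have W: "blk c z (Suc N) = replicate a (lt z) @ rest" by (simp add: blk_Suc a_def rest_def)
  have a1: "a \<ge> 1" using pos[rule_format, of z] by (simp add: a_def)
  consider "n < a" | "n = a" | "n > a" by linarith
  then show ?case
  proof cases
    case 1
    have "n - 1 < a" using 1 by simp
    hence "blk c z (Suc N) ! (n-1) = lt z" "blk c z (Suc N) ! n = lt z" using 1 by (simp_all add: W nth_append)
    then show ?thesis using Suc.prems by simp
  next
    case 2
    have "n < a + length rest" using Suc.prems W by simp
    hence "N > 0" using 2 by (cases N) (auto simp: rest_def)
    hence "rest ! 0 = lt (Suc z)" using blk_ne_hd[OF pos, of N "Suc z"] by (simp add: rest_def)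
    moreover have "length (blk c z 1) = a" by (simp add: blk_Suc a_def)
    ultimately show ?thesis using 2 \<open>N > 0\<close> unfolding W by (intro exI[of _ 1]) (auto simp: nth_append)
  next
    case 3
    define n' where "n' = n - a"
    have n'0: "0 < n'" using 3 by (simp add: n'_def)
    have n'l: "n' < length rest" using Suc.prems 3 W by (simp add: n'_def)
    have e1: "blk c z (Suc N) ! n = rest ! n'" unfolding W using 3 by (simp add: nth_append n'_def)
    have nn: "\<not> (n - 1 < a)" using 3 by simp
    have nn2: "n - 1 - a = n' - 1" by (simp add: n'_def)
    have e2: "blk c z (Suc N) ! (n - 1) = rest ! (n' - 1)" unfolding W nth_append using nn nn2 by simp
    have "rest ! (n' - 1) \<noteq> rest ! n'" using Suc.prems e1 e2 by simp
    then obtain s where s: "0 < s" "s < N" "n' = length (blk c (Suc z) s)" "rest ! n' = lt (Suc z + s)"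
      using Suc.IH[OF n'0 n'l[unfolded rest_def]] unfolding rest_def by blast
    have "length (blk c z (Suc s)) = a + length (blk c (Suc z) s)" by (simp add: blk_Suc a_def)
    hence "n = length (blk c z (Suc s))" using s(3) 3 by (simp add: n'_def)
    then show ?thesis using s e1 by (intro exI[of _ "Suc s"]) auto
  qed
qed

lemma per_from_lt:
  assumes "per c P" "P > 0" "\<forall>i<P. c (i + s) = c i"
  shows "per c s"
  unfolding per_def
proof
  fix j
  have "c j = c (j mod P)" by (rule per_mod[OF assms(1)])
  moreover have "c (j + s) = c (j mod P + s + (j div P) * P)" by (simp add: algebra_simps)
  moreover have "c (j mod P + s + (j div P) * P) = c (j mod P + s)" by (rule per_mult[OF assms(1)])
  moreover have "c (j mod P + s) = c (j mod P)" using assms(2,3) by simp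
  ultimately show "c (j + s) = c j" by simp
qed

lemma blk_primitive:
  assumes pos: "\<forall>i. c i \<ge> 1" and pp: "p > 0" "per c p"
  shows "primitive_word (blk c 0 (evp c))"
proof -
  define P where "P = evp c"
  have P: "P > 0" "even P" "per c P" using evp_props[OF pp] by (auto simp: P_def)
  have P2: "P \<ge> 2" using P by presburger
  define W where "W = blk c 0 P"
  have Wne: "W \<noteq> []" and W0: "W ! 0 = L" using blk_ne_hd[OF pos P(1), of 0] by (auto simp: W_def lt_def)
  have Wl: "last W = R" using blk_last[OF pos P(1), of 0] P(1,2) by (simp add: W_def lt_def)
  have "\<not> (\<exists>u m. m \<ge> 2 \<and> W = concat (replicate m u))"
  proof
    assume "\<exists>u m. m \<ge> 2 \<and> W = concat (replicate m u)"
    then obtain u m where um: "m \<ge> 2" "W = concat (replicate m u)" by blast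
    define n where "n = length u"
    have rot: "rotate n W = W" using um by (simp add: n_def rotate_self_pow)
    have lW: "length W = m * n" using um by (simp add: n_def length_concat sum_list_replicate)
    have n0: "n > 0" using Wne lW by (cases n) auto
    have "1 * n < m * n" using um(1) n0 by (intro mult_strict_right_mono) auto
    hence nl: "n < length W" using lW by simp
    have "W ! n = W ! 0"
    proof -
      have "rotate n W ! 0 = W ! ((0 + n) mod length W)" using Wne by (simp add: nth_rotate)
      thus ?thesis using rot nl by simp
    qed
    hence Wn: "W ! n = L" using W0 by simp
    have "W ! (n - 1) = W ! (length W - 1)"
    proof -
      have "rotate n W ! (length W - 1) = W ! ((length W - 1 + n) mod length W)" using Wne by (simp add: nth_rotate add.commute)
      moreover have "(length W - 1 + n) mod length W = n - 1"
      proof -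
        have "length W \<ge> 1" using Wne by (cases W) auto
        hence eqa: "length W - 1 + n = (n - 1) + length W" using n0 by simp
        have "n - 1 < length W" using nl by simp
        hence eqb: "((n - 1) + length W) mod length W = n - 1" by simp
        show ?thesis unfolding eqa by (rule eqb)
      qed
      ultimately show ?thesis using rot by simp
    qed
    moreover have "W ! (length W - 1) = R" using Wl Wne by (simp add: last_conv_nth)
    ultimately have Wn1: "W ! (n - 1) = R" by simp
    obtain s where s: "0 < s" "s < P" "n = length (blk c 0 s)" "W ! n = lt (0 + s)"
    proof -
      have "blk c 0 P ! (n - 1) \<noteq> blk c 0 P ! n" using Wn Wn1 by (simp add: W_def)
      from split_point[OF pos n0 nl[unfolded W_def] this] show ?thesis using that unfolding W_def by blast
    qed
    have "lt s = L" using s(4) Wn by simp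
    hence es: "even s" by (simp add: lt_def split: if_splits)
    have "W = blk c 0 s @ blk c s (P - s)" unfolding W_def using blk_add[of c 0 s "P - s"] s(2) by simp
    hence "rotate n W = blk c s (P - s) @ blk c 0 s" using s(3) by (simp add: rotate_append)
    also have "blk c 0 s = blk c (s + (P - s)) s" using blk_per[OF P(3) P(2), of 0 s] s(2) by simp
    also have "blk c s (P - s) @ blk c (s + (P - s)) s = blk c s P" using blk_add[of c s "P - s" s] s(2) by simp
    also have "\<dots> = blk (\<lambda>i. c (i + s)) 0 P" using blk_shift[OF es, of c 0 P] by simp
    finally have "blk (\<lambda>i. c (i + s)) 0 P = blk c 0 P" using rot by (simp add: W_def)
    moreover have "\<forall>i. c (i + s) \<ge> 1" using pos by blast
    ultimately have "\<forall>i. 0 \<le> i \<and> i < 0 + P \<longrightarrow> c (i + s) = c i" using blk_inj[of "\<lambda>i. c (i + s)" c 0 P] pos by blast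
    hence "per c s" using per_from_lt[OF P(3) P(1)] by simp
    hence "P \<le> s" unfolding P_def using evp_le[OF s(1) _ es] by simp
    with s(2) show False by simp
  qed
  thus ?thesis using Wne by (simp add: primitive_word_def W_def P_def)
qed

lemma rot2:
  assumes "per d P" "even P" "P \<ge> 2"
  shows "blk (\<lambda>t. d (t + 2)) 0 P = rotate (length (blk d 0 2)) (blk d 0 P)"
proof -
  have PP1: "P - 2 + 2 = P" and PP2: "2 + (P - 2) = P" using assms(3) by simp_all
  have e1: "blk (\<lambda>t. d (t + 2)) 0 P = blk d 2 P" using blk_shift[of 2 d 0 P] by (simp add: numeral_2_eq_2)
  have e2: "blk d 2 P = blk d 2 (P - 2) @ blk d P 2" using blk_add[of d 2 "P - 2" 2, unfolded PP1 PP2] .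
  have e3: "blk d P 2 = blk d 0 2" using blk_per[OF assms(1,2), of 0 2] by simp
  have e4: "blk d 0 P = blk d 0 2 @ blk d 2 (P - 2)" using blk_add[of d 0 2 "P - 2", unfolded PP2] by (simp add: numeral_2_eq_2)
  show ?thesis unfolding e1 e2 e3 e4 by (simp add: rotate_append)
qed

lemma rot_even_shift:
  assumes "per d P" "even P" "P \<ge> 2"
  shows "\<exists>r. blk (\<lambda>t. d (t + 2 * s)) 0 P = rotate r (blk d 0 P)"
proof (induction s)
  case 0 then show ?case by (intro exI[of _ 0]) simp
next
  case (Suc s)
  then obtain r where r: "blk (\<lambda>t. d (t + 2 * s)) 0 P = rotate r (blk d 0 P)" by blast
  define d' where "d' = (\<lambda>t. d (t + 2 * s))"
  have "per d' P" unfolding per_def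
  proof
    fix j
    have "d ((j + 2*s) + P) = d (j + 2*s)" using assms(1) by (simp add: per_def)
    thus "d' (j + P) = d' j" by (simp add: d'_def algebra_simps)
  qed
  from rot2[OF this assms(2,3)]
  have "blk (\<lambda>t. d' (t + 2)) 0 P = rotate (length (blk d' 0 2)) (blk d' 0 P)" .
  moreover have "(\<lambda>t. d' (t + 2)) = (\<lambda>t. d (t + 2 * Suc s))" by (simp add: d'_def algebra_simps)
  ultimately have "blk (\<lambda>t. d (t + 2 * Suc s)) 0 P = rotate (length (blk d' 0 2)) (rotate r (blk d 0 P))"
    using r by (simp add: d'_def)
  thus ?case by (auto simp: rotate_rotate)
qed

lemma per_shift_iff:
  assumes "q > 0" "per d q"
  shows "per (\<lambda>t. d (t + e)) p \<longleftrightarrow> per d p"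
proof
  assume h: "per (\<lambda>t. d (t + e)) p"
  show "per d p" unfolding per_def
  proof
    fix j
    have eq: "e \<le> e * q" using assms(1) by simp
    define j0 where "j0 = j + (e * q - e)"
    have j0e: "j0 + e = j + e * q" by (simp only: j0_def add.assoc le_add_diff_inverse2[OF eq])
    have "d (j + p) = d (j + p + e * q)" using per_mult[OF assms(2), of "j + p" e] by (simp add: mult.commute)
    also have "j + p + e * q = (j0 + p) + e" using j0e by simp
    also have "d ((j0 + p) + e) = d (j0 + e)" using h[unfolded per_def, rule_format, of j0] by (simp add: ac_simps)
    also have "d (j0 + e) = d j" using j0e per_mult[OF assms(2), of j e] by (simp add: mult.commute)
    finally show "d (j + p) = d j" .
  qed
next
  assume h: "per d p"
  show "per (\<lambda>t. d (t + e)) p" unfolding per_def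
  proof
    fix j
    show "d (j + p + e) = d (j + e)" using h[unfolded per_def, rule_format, of "j + e"] by (simp add: ac_simps)
  qed
qed

lemma evp_shift:
  assumes "q > 0" "per d q"
  shows "evp (\<lambda>t. d (t + e)) = evp d"
  unfolding evp_def minp_def using per_shift_iff[OF assms] by simp

lemma W_shift:
  assumes "q > 0" "per d q" "even e"
  shows "cyc_equiv (blk (\<lambda>t. d (t + e)) 0 (evp (\<lambda>t. d (t + e)))) (blk d 0 (evp d))"
proof -
  define P where "P = evp d"
  have P: "P > 0" "even P" "per d P" using evp_props[OF assms(1,2)] by (auto simp: P_def)
  have P2: "P \<ge> 2" using P by presburger
  obtain s where s: "e = 2 * s" using assms(3) by blast
  obtain r where "blk (\<lambda>t. d (t + e)) 0 P = rotate r (blk d 0 P)" using rot_even_shift[OF P(3) P(2) P2, of s] s by blast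
  hence "cyc_equiv (blk d 0 P) (blk (\<lambda>t. d (t + e)) 0 P)" unfolding cyc_equiv_def by metis
  hence "cyc_equiv (blk (\<lambda>t. d (t + e)) 0 P) (blk d 0 P)" by (rule cyc_sym)
  thus ?thesis using evp_shift[OF assms(1,2), of e] by (simp add: P_def)
qed


abbreviation irr :: "real \<Rightarrow> bool" where "irr x \<equiv> x \<notin> \<rat>"

definition rel :: "real \<Rightarrow> real \<Rightarrow> bool \<Rightarrow> bool" where
  "rel x y b \<longleftrightarrow> (\<exists>i j. cf_rem x i = cf_rem y j \<and> (even (i + j) \<longleftrightarrow> b))"

lemma irr_add_int: "irr x \<Longrightarrow> irr (x + of_int n)"
  by (metis Rats_diff Rats_of_int add_diff_cancel_right')

lemma irr_minus: "irr x \<Longrightarrow> irr (- x)"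
  by (simp)

lemma irr_inv: "irr x \<Longrightarrow> irr (1 / x)"
  by (metis Rats_divide Rats_1 div_by_1 divide_divide_eq_right mult_1)

lemma irr_nonint: "irr x \<Longrightarrow> x \<noteq> of_int n"
  by auto

lemma irr_rem: "irr x \<Longrightarrow> irr (cf_rem x n)"
proof (induction n)
  case (Suc n)
  have "irr (cf_rem x n - of_int \<lfloor>cf_rem x n\<rfloor>)" using irr_add_int[OF Suc.IH[OF Suc.prems], of "- \<lfloor>cf_rem x n\<rfloor>"] by simp
  then show ?case using irr_inv by simp
qed simp

lemma rem_shift: "cf_rem x i = cf_rem y j \<Longrightarrow> cf_rem x (i + t) = cf_rem y (j + t)"
  by (simp add: cf_rem_add)

lemma rel_refl: "rel x x True"
  unfolding rel_def by (intro exI[of _ 0]) auto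

lemma rel_sym: "rel x y b \<Longrightarrow> rel y x b"
  unfolding rel_def by (metis add.commute)

lemma rel_trans: "rel x y b1 \<Longrightarrow> rel y z b2 \<Longrightarrow> rel x z (b1 \<longleftrightarrow> b2)"
proof -
  assume "rel x y b1" "rel y z b2"
  then obtain i j k l where h: "cf_rem x i = cf_rem y j" "even (i + j) \<longleftrightarrow> b1"
    "cf_rem y k = cf_rem z l" "even (k + l) \<longleftrightarrow> b2" unfolding rel_def by blast
  have "cf_rem x (i + k) = cf_rem y (j + k)" using rem_shift[OF h(1)] .
  also have "\<dots> = cf_rem y (k + j)" by (simp add: add.commute)
  also have "\<dots> = cf_rem z (l + j)" using rem_shift[OF h(3)] .
  finally have "cf_rem x (i + k) = cf_rem z (l + j)" .
  moreover have "even (i + k + (l + j)) \<longleftrightarrow> (b1 \<longleftrightarrow> b2)" using h(2,4) by auto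
  ultimately show ?thesis unfolding rel_def by blast
qed

lemma rem1_transl: "cf_rem (x + of_int n) 1 = cf_rem x 1"
  by simp

lemma remS_transl: "cf_rem (x + of_int n) (Suc k) = cf_rem x (Suc k)"
  using cf_rem_add[of "x + of_int n" 1 k] cf_rem_add[of x 1 k] by simp

lemma rel_transl: "rel x (x + of_int n) True"
  unfolding rel_def by (intro exI[of _ 1] exI[of _ 1]) simp

lemma rel_inv_pos:
  assumes "irr x" "x > 0"
  shows "rel x (1 / x) False"
proof (cases "x < 1")
  case True
  have "\<lfloor>x\<rfloor> = 0" using True assms(2) by (simp add: floor_eq_iff)
  hence "cf_rem x 1 = cf_rem (1/x) 0" by simp
  thus ?thesis unfolding rel_def by (intro exI[of _ 1] exI[of _ 0]) auto
next
  case False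
  have "x \<noteq> 1" using assms(1) by auto
  hence x1: "x > 1" using False by simp
  have "\<lfloor>1/x\<rfloor> = 0" using x1 by (simp add: floor_eq_iff)
  hence "cf_rem (1/x) 1 = cf_rem x 0" by simp
  thus ?thesis unfolding rel_def by (intro exI[of _ 0] exI[of _ 1]) auto
qed

lemma rel_neg:
  assumes u: "irr u"
  shows "rel u (- u) False"
proof -
  define f where "f = u - of_int \<lfloor>u\<rfloor>"
  have f0: "0 < f" using u irr_nonint[OF u, of "\<lfloor>u\<rfloor>"] by (simp add: f_def) (smt (verit) of_int_floor_le)
  have f1: "f < 1" by (simp add: f_def) linarith
  have fh: "f \<noteq> 1/2"
  proof
    assume "f = 1/2"
    hence "u = of_int \<lfloor>u\<rfloor> + 1/2" by (simp add: f_def)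
    hence "u \<in> \<rat>" by (metis Rats_add Rats_of_int Rats_divide Rats_1 Rats_number_of)
    with u show False by simp
  qed
  have fl: "\<lfloor>- u\<rfloor> = - \<lfloor>u\<rfloor> - 1"
  proof -
    have "of_int (- \<lfloor>u\<rfloor> - 1) \<le> - u" "- u < of_int (- \<lfloor>u\<rfloor> - 1) + 1" using f0 f1 by (simp_all add: f_def)
    thus ?thesis by (simp add: floor_eq_iff)
  qed
  define v where "v = 1 / (1 - f)"
  have r1: "cf_rem (- u) 1 = v" by (simp add: fl v_def f_def algebra_simps)
  have u1: "cf_rem u 1 = 1 / f" by (simp add: f_def)
  show ?thesis
  proof (cases "f < 1/2")
    case True
    have v1: "1 < v" "v < 2" using True f0 by (simp_all add: v_def field_simps)
    hence "\<lfloor>v\<rfloor> = 1" by (simp add: floor_eq_iff)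
    have "cf_rem (- u) 2 = cf_rem (cf_rem (-u) 1) 1" using cf_rem_add[of "-u" 1 1] by (simp add: numeral_2_eq_2 del: cf_rem.simps)
    also have "\<dots> = cf_rem v 1" using r1 by (simp del: cf_rem.simps)
    also have "\<dots> = 1 / (v - 1)" using \<open>\<lfloor>v\<rfloor> = 1\<close> by simp
    finally have "cf_rem (- u) 2 = 1 / (v - 1)" .
    also have "1 / (v - 1) = 1/f + of_int (-1)" using f0 f1 by (simp add: v_def field_simps)
    finally have r2: "cf_rem (- u) 2 = cf_rem u 1 + of_int (-1)" using u1 by simp
    have "cf_rem (- u) 3 = cf_rem (cf_rem (-u) 2) 1" using cf_rem_add[of "-u" 2 1] by simp
    also have "\<dots> = cf_rem (cf_rem u 1) 1" unfolding r2 by (rule rem1_transl)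
    also have "\<dots> = cf_rem u 2" using cf_rem_add[of u 1 1] by (simp add: numeral_2_eq_2 del: cf_rem.simps)
    finally show ?thesis unfolding rel_def by (intro exI[of _ 3] exI[of _ 2]) auto
  next
    case False
    hence fg: "f > 1/2" using fh by simp
    have "1 < 1/f" "1/f < 2" using fg f1 by (simp_all add: field_simps)
    hence "\<lfloor>1/f\<rfloor> = 1" by (simp add: floor_eq_iff)
    have "cf_rem u 2 = cf_rem (cf_rem u 1) 1" using cf_rem_add[of u 1 1] by (simp add: numeral_2_eq_2 del: cf_rem.simps)
    also have "\<dots> = cf_rem (1/f) 1" using u1 by (simp del: cf_rem.simps)
    also have "\<dots> = 1 / (1/f - 1)" using \<open>\<lfloor>1/f\<rfloor> = 1\<close> by simp
    finally have u2: "cf_rem u 2 = 1 / (1/f - 1)" .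
    have "v = cf_rem u 2 + of_int 1" unfolding u2 v_def using f0 f1 by (simp add: field_simps)
    hence "cf_rem (- u) 2 = cf_rem (cf_rem u 2 + of_int 1) 1" using r1 cf_rem_add[of "-u" 1 1] by (simp add: numeral_2_eq_2 del: cf_rem.simps)
    also have "\<dots> = cf_rem (cf_rem u 2) 1" by (rule rem1_transl)
    also have "\<dots> = cf_rem u 3" using cf_rem_add[of u 2 1] by (simp del: cf_rem.simps)
    finally show ?thesis unfolding rel_def by (intro exI[of _ 2] exI[of _ 3]) auto
  qed
qed

lemma rel_inv:
  assumes "irr y" "y \<noteq> 0"
  shows "rel y (1 / y) False"
proof (cases "y > 0")
  case True then show ?thesis using rel_inv_pos assms by blast
next
  case False
  hence yn: "- y > 0" using assms(2) by simp
  have a: "rel y (- y) False" by (rule rel_neg[OF assms(1)])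
  have b: "rel (- y) (1 / (- y)) False" by (rule rel_inv_pos[OF irr_minus[OF assms(1)] yn])
  have c: "rel (1 / (- y)) (- (1 / (- y))) False" by (rule rel_neg[OF irr_inv[OF irr_minus[OF assms(1)]]])
  have "rel y (- (1 / (- y))) False" using rel_trans[OF rel_trans[OF a b] c] by simp
  thus ?thesis by simp
qed

definition mob :: "mat2 \<Rightarrow> real \<Rightarrow> real" where
  "mob g x = (case g of (al, be, ga, de) \<Rightarrow> (of_int al * x + of_int be) / (of_int ga * x + of_int de))"

lemma mob_main:
  "\<forall>al be ga de x. nat \<bar>ga\<bar> = m \<longrightarrow> (al * de - be * ga = 1 \<or> al * de - be * ga = -1) \<longrightarrow> irr x \<longrightarrow>
     irr (mob (al, be, ga, de) x) \<and> rel x (mob (al, be, ga, de) x) (al * de - be * ga = 1)"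
proof (induction m rule: less_induct)
  case (less m)
  show ?case
  proof (intro allI impI)
    fix al be ga de :: int and x :: real
    assume m: "nat \<bar>ga\<bar> = m" and det: "al * de - be * ga = 1 \<or> al * de - be * ga = -1" and x: "irr x"
    show "irr (mob (al, be, ga, de) x) \<and> rel x (mob (al, be, ga, de) x) (al * de - be * ga = 1)"
    proof (cases "ga = 0")
      case True
      hence "al * de = 1 \<or> al * de = -1" using det by simp
      hence cases: "(al = 1 \<and> de = 1) \<or> (al = -1 \<and> de = -1) \<or> (al = 1 \<and> de = -1) \<or> (al = -1 \<and> de = 1)"
        using zmult_eq_1_iff zmult_eq_neg1_iff by blast
      have pos: "irr (x + of_int n) \<and> rel x (x + of_int n) True" for n
        using irr_add_int[OF x] rel_transl by blast
      have neg: "irr (- x + of_int n) \<and> rel x (- x + of_int n) False" for n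
        using irr_add_int[OF irr_minus[OF x]] rel_trans[OF rel_neg[OF x] rel_transl[of "-x" n]] by simp
      from cases show ?thesis
      proof (elim disjE conjE)
        assume "al = 1" "de = 1" thus ?thesis using pos[of be] True by (simp add: mob_def)
      next
        assume "al = -1" "de = -1" thus ?thesis using pos[of "-be"] True by (simp add: mob_def)
      next
        assume "al = 1" "de = -1" thus ?thesis using neg[of "-be"] True by (simp add: mob_def)
      next
        assume "al = -1" "de = 1" thus ?thesis using neg[of "be"] True by (simp add: mob_def)
      qed
    next
      case False
      define q where "q = al div ga"
      define r where "r = al mod ga"
      define be' where "be' = be - q * de"
      have alq: "al = q * ga + r" by (simp add: q_def r_def)
      have rl: "nat \<bar>r\<bar> < m" using abs_mod_less[OF False, of al] m by (simp add: r_def)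
      have det'': "ga * be' - de * r = - (al * de - be * ga)" by (simp add: be'_def alq algebra_simps)
      have det2: "ga * be' - de * r = 1 \<or> ga * be' - de * r = -1" using det det'' by auto
      define y where "y = mob (ga, de, r, be') x"
      have IH: "irr y \<and> rel x y (ga * be' - de * r = 1)"
        using less.IH[OF rl, rule_format, of r ga be' de x] det2 x by (simp add: y_def)
      have den: "of_int ga * x + of_int de \<noteq> 0"
      proof
        assume "of_int ga * x + of_int de = 0"
        hence "x = - of_int de / of_int ga" using False by (simp add: field_simps)
        hence "x \<in> \<rat>" by simp
        with x show False by simp
      qed
      have y0: "y \<noteq> 0" using IH by auto
      have eq: "mob (al, be, ga, de) x = 1 / y + of_int q"
      proof -
        have "mob (al, be, ga, de) x = (of_int q * (of_int ga * x + of_int de) + (of_int r * x + of_int be')) / (of_int ga * x + of_int de)"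
          by (simp add: mob_def alq be'_def algebra_simps)
        also have "\<dots> = of_int q + (of_int r * x + of_int be') / (of_int ga * x + of_int de)"
          using den by (simp add: field_simps)
        also have "(of_int r * x + of_int be') / (of_int ga * x + of_int de) = 1 / y"
          by (simp add: y_def mob_def)
        finally show ?thesis by simp
      qed
      have i1: "irr (1 / y)" using irr_inv IH by blast
      have r2: "rel x (1 / y + of_int q) (ga * be' - de * r \<noteq> 1)"
        using rel_trans[OF rel_trans[OF conjunct2[OF IH] rel_inv[OF conjunct1[OF IH] y0]] rel_transl[of "1/y" q]] by simp
      have "(ga * be' - de * r \<noteq> 1) \<longleftrightarrow> (al * de - be * ga = 1)" using det'' det by auto
      thus ?thesis using r2 eq irr_add_int[OF i1, of q] by simp
    qed
  qed
qed

lemma mob_rel: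
  assumes "al * de - be * ga = 1" "irr x"
  shows "rel x (mob (al, be, ga, de) x) True"
  using mob_main[rule_format, OF refl, of al de be ga x] assms by simp

lemma wQ_irr:
  assumes "Q \<in> Qplus" shows "irr (wQ Q)"
proof
  obtain A B C where Q: "Q = (A,B,C)" by (cases Q)
  have A: "A \<noteq> 0" using Qplus_A assms Q by blast
  have D: "\<forall>n::int. B^2-4*A*C \<noteq> n^2" "B^2-4*A*C \<ge> 0" using assms by (auto simp: Q Qplus_iff)
  have s: "sqrt (real_of_int (B^2-4*A*C)) \<notin> \<rat>" by (rule sqrt_nonsq_irrat[OF D])
  assume "wQ Q \<in> \<rat>"
  moreover have "sqrt (real_of_int (B^2-4*A*C)) = 2 * of_int A * wQ Q + of_int B"
    using A by (simp add: wQ_def Q disc_def field_simps)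
  ultimately have "sqrt (real_of_int (B^2-4*A*C)) \<in> \<rat>" by simp
  with s show False by simp
qed


lemma disc_qact: "disc (qact Q g) = (case g of (al,be,ga,de) \<Rightarrow> (al*de - be*ga)^2) * disc Q"
  by (cases Q; cases g) (simp add: qact_def disc_def power2_eq_square algebra_simps)

lemma qact_Qplus: "Q \<in> Qplus \<Longrightarrow> g \<in> SL2Z \<Longrightarrow> qact Q g \<in> Qplus"
  using disc_qact[of Q g] by (cases g) (auto simp: SL2Z_def Qplus_def)

lemma key_identity:
  fixes A B C al be ga de s :: real
  assumes "s^2 = B^2 - 4*A*C" "al*de - be*ga = 1"
  shows "(-(2 * A * al * be + B * (al * de + be * ga) + 2 * C * ga * de) + s) * (-ga*(-B+s) + 2*A*al)
       = 2*(A * al^2 + B * al * ga + C * ga^2) * (de*(-B+s) - 2*A*be)"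
  using assms by algebra

lemma wQ_act:
  assumes Q: "Q \<in> Qplus" and g: "g \<in> SL2Z"
  shows "wQ (qact Q g) = mob (case g of (al,be,ga,de) \<Rightarrow> (de, -be, -ga, al)) (wQ Q)"
proof -
  obtain A B C where Qe: "Q = (A,B,C)" by (cases Q)
  obtain al be ga de where ge: "g = (al,be,ga,de)" by (cases g)
  have det: "al*de - be*ga = 1" using g by (simp add: ge SL2Z_def)
  define A' where "A' = A * al^2 + B * al * ga + C * ga^2"
  define B' where "B' = 2 * A * al * be + B * (al * de + be * ga) + 2 * C * ga * de"
  define C' where "C' = A * be^2 + B * be * de + C * de^2"
  have Q'e: "qact Q g = (A',B',C')" by (simp add: Qe ge qact_def A'_def B'_def C'_def)
  have Q': "(A',B',C') \<in> Qplus" using qact_Qplus[OF Q g] Q'e by simp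
  have A'0: "A' \<noteq> 0" using Qplus_A[OF Q'] .
  have A0: "A \<noteq> 0" using Qplus_A Q Qe by blast
  have dd: "disc (A',B',C') = disc (A,B,C)" using disc_qact[of Q g] Q'e det by (simp add: Qe ge)
  define s where "s = sqrt (real_of_int (B^2 - 4*A*C))"
  have "B^2-4*A*C > 0" using Q by (simp add: Qe Qplus_iff)
  hence D0: "real_of_int (B^2-4*A*C) > 0" by linarith
  have s2: "s^2 = (of_int B)^2 - 4*of_int A*of_int C" unfolding s_def using D0 by simp
  define x where "x = wQ Q"
  have xe: "x = (- of_int B + s) / (2 * of_int A)" by (simp add: x_def Qe wQ_def disc_def s_def)
  have w'e: "wQ (qact Q g) = (- of_int B' + s) / (2 * of_int A')"
    using dd by (simp add: Q'e wQ_def s_def disc_def)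
  have xi: "irr x" using wQ_irr[OF Q] by (simp add: x_def)
  have den: "- of_int ga * x + of_int al \<noteq> 0"
  proof
    assume h: "- of_int ga * x + of_int al = 0"
    show False
    proof (cases "ga = 0")
      case True
      hence "al = 0" using h by simp
      thus False using det True by simp
    next
      case False
      hence "x = of_int al / of_int ga" using h by (simp add: field_simps)
      hence "x \<in> \<rat>" by simp
      with xi show False by simp
    qed
  qed
  have ki: "(- of_int B' + s) * (- of_int ga * (- of_int B + s) + 2 * of_int A * of_int al)
       = 2 * of_int A' * (of_int de * (- of_int B + s) - 2 * of_int A * of_int be)"
  proof -
    have detr: "of_int al * of_int de - of_int be * of_int ga = (1::real)" using det by (metis of_int_1 of_int_diff of_int_mult)
    show ?thesis using key_identity[OF s2 detr] unfolding A'_def B'_def by simp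
  qed
  have k1: "- of_int ga * (- of_int B + s) + 2 * of_int A * of_int al = 2 * of_int A * (- of_int ga * x + of_int al)"
    using A0 by (simp add: xe field_simps)
  have k2: "of_int de * (- of_int B + s) - 2 * of_int A * of_int be = 2 * of_int A * (of_int de * x - of_int be)"
    using A0 by (simp add: xe field_simps)
  have "(2 * of_int A) * ((- of_int B' + s) * (- of_int ga * x + of_int al)) = (2 * of_int A) * (2 * of_int A' * (of_int de * x - of_int be))"
    using ki unfolding k1 k2 by (simp add: ac_simps)
  hence "(- of_int B' + s) * (- of_int ga * x + of_int al) = 2 * of_int A' * (of_int de * x - of_int be)"
    using A0 by simp
  hence "(- of_int B' + s) / (2 * of_int A') = (of_int de * x - of_int be) / (- of_int ga * x + of_int al)"
    using A'0 den by (simp add: field_simps)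
  thus ?thesis unfolding w'e by (simp add: ge mob_def x_def)
qed

lemma rel_act:
  assumes "Q \<in> Qplus" "g \<in> SL2Z"
  shows "rel (wQ Q) (wQ (qact Q g)) True"
proof -
  obtain al be ga de where ge: "g = (al,be,ga,de)" by (cases g)
  have det: "de * al - (- be) * (- ga) = 1" using assms(2) by (simp add: ge SL2Z_def algebra_simps)
  show ?thesis using mob_rel[OF det wQ_irr[OF assms(1)]] wQ_act[OF assms] by (simp add: ge)
qed

primrec ev :: "int list \<Rightarrow> real \<Rightarrow> real" where
  "ev [] z = z"
| "ev (a # as) z = of_int a + 1 / ev as z"

primrec mat :: "int list \<Rightarrow> mat2" where
  "mat [] = (1, 0, 0, 1)"
| "mat (a # as) = (case mat as of (p, p', q, q') \<Rightarrow> (a*p+q, a*p'+q', p, p'))"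

lemma mat_inv:
  assumes "\<forall>a\<in>set as. a \<ge> 1" "mat as = (P, P', Q, Q')"
  shows "P \<ge> 0 \<and> P' \<ge> 0 \<and> Q \<ge> 0 \<and> Q' \<ge> 0 \<and> Q + Q' \<ge> 1 \<and> P + P' \<ge> 1 \<and> P * Q' - P' * Q = (-1)^length as
     \<and> (as \<noteq> [] \<longrightarrow> P \<ge> 1 \<and> Q \<ge> 1 \<and> P' \<ge> 1 \<and> P + P' > Q + Q')
     \<and> (length as \<ge> 2 \<longrightarrow> P \<ge> 2 \<and> Q' \<ge> 1)"
  using assms
proof (induction as arbitrary: P P' Q Q')
  case Nil then show ?case by auto
next
  case (Cons a as)
  obtain p p' q q' where m: "mat as = (p, p', q, q')" by (cases "mat as")
  have a: "a \<ge> 1" using Cons.prems by simp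
  have IH: "p \<ge> 0 \<and> p' \<ge> 0 \<and> q \<ge> 0 \<and> q' \<ge> 0 \<and> q + q' \<ge> 1 \<and> p + p' \<ge> 1 \<and> p * q' - p' * q = (-1)^length as
     \<and> (as \<noteq> [] \<longrightarrow> p \<ge> 1 \<and> q \<ge> 1 \<and> p' \<ge> 1 \<and> p + p' > q + q')
     \<and> (length as \<ge> 2 \<longrightarrow> p \<ge> 2 \<and> q' \<ge> 1)" using Cons.IH[OF _ m] Cons.prems by simp
  have e: "P = a*p+q" "P' = a*p'+q'" "Q = p" "Q' = p'" using Cons.prems m by auto
  have "(a - 1) * p \<ge> 0" "(a - 1) * p' \<ge> 0" using a IH by simp_all
  hence ap: "a*p \<ge> p" "a*p' \<ge> p'" by (simp_all add: algebra_simps)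
  have det: "P * Q' - P' * Q = (-1)^length (a#as)" using IH by (simp add: e algebra_simps)
  show ?case
  proof (cases "as = []")
    case True
    hence "p = 1" "p' = 0" "q = 0" "q' = 1" using m by auto
    thus ?thesis using det a by (simp add: e True)
  next
    case False
    have l2: "length (a # as) \<ge> 2" using False by (cases as) auto
    have i1: "p \<ge> 1" "q \<ge> 1" "p' \<ge> 1" "q' \<ge> 0" "p \<ge> 0" "q + q' \<ge> 1" using IH False by auto
    have g1: "P \<ge> 0 \<and> P' \<ge> 0 \<and> Q \<ge> 0 \<and> Q' \<ge> 0 \<and> Q + Q' \<ge> 1 \<and> P + P' \<ge> 1"
      using i1 ap unfolding e by linarith
    have g2: "P \<ge> 1 \<and> Q \<ge> 1 \<and> P' \<ge> 1 \<and> P + P' > Q + Q'" using i1 ap unfolding e by linarith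
    have g3: "P \<ge> 2 \<and> Q' \<ge> 1" using i1 ap unfolding e by linarith
    show ?thesis using g1 g2 g3 det by blast
  qed
qed

lemma ev_mob:
  assumes "\<forall>a\<in>set as. a \<ge> 1" "z > 0" "mat as = (P, P', Q, Q')"
  shows "ev as z = (of_int P * z + of_int P') / (of_int Q * z + of_int Q') \<and> ev as z > 0"
  using assms
proof (induction as arbitrary: P P' Q Q')
  case Nil then show ?case by auto
next
  case (Cons a as)
  obtain p p' q q' where m: "mat as = (p, p', q, q')" by (cases "mat as")
  have a: "a \<ge> 1" using Cons.prems by simp
  have IH: "ev as z = (of_int p * z + of_int p') / (of_int q * z + of_int q') \<and> ev as z > 0"
    using Cons.IH[OF _ Cons.prems(2) m] Cons.prems by simp
  have inv: "q \<ge> 0 \<and> q' \<ge> 0 \<and> q + q' \<ge> 1" using mat_inv[OF _ m] Cons.prems by simp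
  have qpos: "of_int q * z + of_int q' > 0"
  proof -
    have "of_int q * z \<ge> 0" using inv Cons.prems(2) by simp
    moreover have "q > 0 \<or> q' > 0" using inv by linarith
    ultimately show ?thesis using inv Cons.prems(2) by (auto simp: add_pos_nonneg add_nonneg_pos)
  qed
  have "of_int p * z + of_int p' = ev as z * (of_int q * z + of_int q')" using IH qpos by simp
  moreover have "ev as z * (of_int q * z + of_int q') > 0" by (rule mult_pos_pos[OF conjunct2[OF IH] qpos])
  ultimately have ppos: "of_int p * z + of_int p' > 0" by simp
  have e: "P = a*p+q" "P' = a*p'+q'" "Q = p" "Q' = p'" using Cons.prems m by auto
  have "ev (a#as) z = of_int a + (of_int q * z + of_int q') / (of_int p * z + of_int p')" using IH by simp
  also have "\<dots> = (of_int P * z + of_int P') / (of_int Q * z + of_int Q')"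
    using ppos by (simp add: e field_simps)
  finally have eq: "ev (a#as) z = (of_int P * z + of_int P') / (of_int Q * z + of_int Q')" .
  have "1 / ev as z > 0" using conjunct2[OF IH] by (simp only: zero_less_divide_1_iff)
  moreover have "real_of_int a \<ge> 1" using a by simp
  moreover have "ev (a#as) z = of_int a + 1 / ev as z" by simp
  ultimately have "ev (a#as) z > 0" by linarith
  with eq show ?case by simp
qed

lemma ev_gt1: "\<forall>a\<in>set as. a \<ge> 1 \<Longrightarrow> z > 1 \<Longrightarrow> ev as z > 1"
proof (induction as)
  case (Cons a as)
  have "ev as z > 1" using Cons by simp
  hence "1 / ev as z > 0" by simp
  moreover have "real_of_int a \<ge> 1" using Cons.prems by simp
  moreover have "ev (a#as) z = of_int a + 1 / ev as z" by simp
  ultimately show ?case by linarith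
qed simp

lemma form_root:
  assumes "(A,B,C) \<in> Qplus"
  shows "of_int A * (wQ (A,B,C))^2 + of_int B * wQ (A,B,C) + of_int C = 0"
proof -
  have A: "A \<noteq> 0" using Qplus_A assms by blast
  have "B^2-4*A*C > 0" using assms by (simp add: Qplus_iff)
  hence D0: "real_of_int (B^2-4*A*C) > 0" by linarith
  define s where "s = sqrt (real_of_int (B^2-4*A*C))"
  have s2: "s^2 = (of_int B)^2 - 4*of_int A*of_int C" unfolding s_def using D0 by simp
  have e: "wQ (A,B,C) = (- of_int B + s) / (2 * of_int A)" by (simp add: wQ_def disc_def s_def)
  define w where "w = wQ (A,B,C)"
  have h1: "2 * of_int A * w + of_int B = s" using A unfolding w_def e by (simp add: field_simps)
  have "4 * of_int A * (of_int A * w^2 + of_int B * w + of_int C) = (2 * of_int A * w + of_int B)^2 - ((of_int B)^2 - 4 * of_int A * of_int C)"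
    by (simp add: power2_eq_square algebra_simps)
  also have "\<dots> = 0" unfolding h1 s2 by simp
  finally show ?thesis using A by (simp add: w_def)
qed

lemma construct:
  assumes pos: "\<forall>i. c i \<ge> 1" and N: "even N" "N \<ge> 2"
  shows "\<exists>Q\<in>Qplus. \<forall>t. cf_digit (wQ Q) t = c (t mod N)"
proof -
  define cs where "cs = map c [0..<N]"
  have cs1: "\<forall>a\<in>set cs. a \<ge> 1" using pos by (auto simp: cs_def)
  obtain P P' Q Q' where m: "mat cs = (P, P', Q, Q')" by (cases "mat cs")
  have inv: "P \<ge> 0 \<and> P' \<ge> 0 \<and> Q \<ge> 0 \<and> Q' \<ge> 0 \<and> P * Q' - P' * Q = 1
     \<and> P \<ge> 1 \<and> Q \<ge> 1 \<and> P' \<ge> 1 \<and> P + P' > Q + Q' \<and> P \<ge> 2 \<and> Q' \<ge> 1"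
  proof -
    have lcs: "length cs = N" by (simp add: cs_def)
    have ne: "cs \<noteq> []" "length cs \<ge> 2" using N lcs by auto
    have pw: "(-1::int)^length cs = 1" using N lcs by simp
    show ?thesis using mat_inv[OF cs1 m, unfolded pw] ne by blast
  qed
  define F where "F = (Q, Q' - P, - P')"
  define T where "T = P + Q'"
  have "disc F = (P + Q')^2 - 4 * (P * Q' - P' * Q)" by (simp add: F_def disc_def power2_eq_square algebra_simps)
  hence dF: "disc F = T^2 - 4" using inv by (simp add: T_def)
  have T3: "T \<ge> 3" using inv by (simp add: T_def)
  have dF2: "disc F = T * T - 4" using dF by (simp add: power2_eq_square)
  have FQ: "F \<in> Qplus"
    unfolding Qplus_def
  proof (intro CollectI conjI notI)
    have "3 * 3 \<le> T * T" using T3 by (intro mult_mono) auto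
    thus "disc F > 0" using dF2 by linarith
    assume "\<exists>n. disc F = n^2"
    then obtain n where n: "disc F = n^2" by blast
    define k where "k = \<bar>n\<bar>"
    have k0: "k \<ge> 0" by (simp add: k_def)
    have kk: "k * k = T * T - 4" using n dF2 by (simp add: k_def power2_eq_square abs_mult_self_eq)
    show False
    proof (cases "k \<ge> T")
      case True
      hence "T * T \<le> k * k" using T3 by (intro mult_mono) auto
      thus False using kk by linarith
    next
      case False
      hence "k \<le> T - 1" by linarith
      hence "k * k \<le> (T - 1) * (T - 1)" using k0 by (intro mult_mono) auto
      moreover have "(T - 1) * (T - 1) = T * T - 2 * T + 1" by (simp add: algebra_simps)
      ultimately show False using kk T3 by linarith
    qed
  qed
  define x where "x = wQ F"
  have root: "of_int Q * x^2 + of_int (Q' - P) * x + of_int (- P') = 0"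
    using form_root[of Q "Q' - P" "- P'"] FQ by (simp add: F_def x_def)
  have x1: "x > 1"
  proof -
    define s where "s = sqrt (real_of_int ((Q' - P)^2 - 4*Q*(-P')))"
    have "(Q' - P)^2 - 4*Q*(-P') = disc F" by (simp add: F_def disc_def)
    hence Dp: "(Q' - P)^2 - 4*Q*(-P') > 0" using FQ by (simp add: Qplus_def)
    hence D0: "real_of_int ((Q' - P)^2 - 4*Q*(-P')) > 0" by linarith
    have s0: "s \<ge> 0" unfolding s_def using D0 by simp
    have s2: "s^2 = real_of_int ((Q' - P)^2 - 4*Q*(-P'))" unfolding s_def using D0 by simp
    have xe: "x = (of_int P - of_int Q' + s) / (2 * of_int Q)" by (simp add: x_def F_def wQ_def disc_def s_def)
    have "(2*Q + Q' - P)^2 < (Q' - P)^2 - 4*Q*(-P')"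
    proof -
      have "(Q' - P)^2 - 4*Q*(-P') - (2*Q + Q' - P)^2 = 4*Q*(P + P' - Q - Q')" by (simp add: power2_eq_square algebra_simps)
      moreover have "4*Q*(P + P' - Q - Q') > 0"
      proof -
        have "4*Q > 0" "P + P' - Q - Q' > 0" using inv by linarith+
        thus ?thesis by (rule mult_pos_pos)
      qed
      ultimately show ?thesis by linarith
    qed
    hence "real_of_int ((2*Q + Q' - P)^2) < real_of_int ((Q' - P)^2 - 4*Q*(-P'))" by (simp only: of_int_less_iff)
    hence "(of_int (2*Q + Q' - P))^2 < s^2" unfolding s2 by (simp only: of_int_power)
    hence "of_int (2*Q + Q' - P) < s" using s0 by (rule power_less_imp_less_base)
    hence "2 * of_int Q < of_int P - of_int Q' + s" by simp
    moreover have "Q > 0" using inv by linarith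
    hence "of_int Q > (0::real)" by simp
    ultimately show ?thesis unfolding xe by (simp add: field_simps)
  qed
  have evx: "ev cs x = x"
  proof -
    have "ev cs x = (of_int P * x + of_int P') / (of_int Q * x + of_int Q')" using ev_mob[OF cs1 _ m] x1 by simp
    moreover have "of_int Q * x + of_int Q' > 0"
    proof -
      have "of_int Q * x > 0" using inv x1 by (intro mult_pos_pos) auto
      moreover have "of_int Q' \<ge> (0::real)" using inv by simp
      ultimately show ?thesis by linarith
    qed
    moreover have "of_int P * x + of_int P' = x * (of_int Q * x + of_int Q')" using root
      by (simp add: power2_eq_square algebra_simps)
    ultimately show ?thesis by simp
  qed
  define y where "y i = ev (drop i cs) x" for i
  have lcs: "length cs = N" by (simp add: cs_def)
  have ygt: "y i > 1" for i
  proof -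
    have "\<forall>a\<in>set (drop i cs). a \<ge> 1" using cs1 by (auto dest: in_set_dropD)
    thus ?thesis unfolding y_def using ev_gt1 x1 by blast
  qed
  have ystep: "y i = of_int (c i) + 1 / y (Suc i)" if "i < N" for i
  proof -
    have "drop i cs = cs ! i # drop (Suc i) cs" using that lcs by (simp add: Cons_nth_drop_Suc)
    moreover have "cs ! i = c i" using that by (simp add: cs_def)
    ultimately show ?thesis by (simp add: y_def)
  qed
  have remy: "i \<le> N \<Longrightarrow> cf_rem x i = y i" for i
  proof (induction i)
    case 0 then show ?case using evx by (simp add: y_def)
  next
    case (Suc i)
    have yi: "y i = of_int (c i) + 1 / y (Suc i)" using ystep Suc.prems by simp
    have "0 < 1 / y (Suc i)" "1 / y (Suc i) < 1" using ygt[of "Suc i"] by simp_all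
    hence fl: "\<lfloor>y i\<rfloor> = c i" unfolding yi by (simp add: floor_eq_iff)
    have "cf_rem x (Suc i) = 1 / (y i - of_int \<lfloor>y i\<rfloor>)" using Suc by simp
    also have "\<dots> = y (Suc i)" using fl yi by simp
    finally show ?case .
  qed
  have xN: "cf_rem x N = x" using remy[of N] lcs by (simp add: y_def)
  have perx: "cf_rem x (q * N + r) = cf_rem x r" for q r
  proof (induction q)
    case (Suc q)
    have "cf_rem x (Suc q * N + r) = cf_rem (cf_rem x N) (q * N + r)" using cf_rem_add[of x N "q*N+r"] by (simp add: algebra_simps)
    then show ?case using Suc xN by simp
  qed simp
  have "cf_digit x t = c (t mod N)" for t
  proof -
    have "cf_rem x t = cf_rem x (t mod N)" using perx[of "t div N" "t mod N"] by simp
    also have "\<dots> = y (t mod N)" using remy[of "t mod N"] N by simp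
    finally have "cf_rem x t = y (t mod N)" .
    moreover have "t mod N < N" using N by simp
    moreover have "\<lfloor>y i\<rfloor> = c i" if "i < N" for i
    proof -
      have "0 < 1 / y (Suc i)" "1 / y (Suc i) < 1" using ygt[of "Suc i"] by simp_all
      thus ?thesis unfolding ystep[OF that] by (simp add: floor_eq_iff)
    qed
    ultimately show ?thesis by (simp add: cf_digit_def)
  qed
  thus ?thesis using FQ by (auto simp: x_def)
qed


lemma Wword_eq: "Wword Q k = blk (\<lambda>i. cf_digit (wQ Q) (2*k+i)) 0 (evp (\<lambda>i. cf_digit (wQ Q) (2*k+i)))"
  unfolding Wword_def even_period_def min_period_def blk_def lt_def evp_def minp_def per_def
  by (simp add: add.assoc)

lemma valid_per: "valid_preperiod x k \<longleftrightarrow> (\<exists>p>0. per (\<lambda>i. cf_digit x (2*k+i)) p)"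
  unfolding valid_preperiod_def per_def by (simp add: add.assoc)

lemma digit_pos: "Q \<in> Qplus \<Longrightarrow> n \<ge> 1 \<Longrightarrow> cf_digit (wQ Q) n \<ge> 1"
proof -
  assume Q: "Q \<in> Qplus" and n: "n \<ge> 1"
  obtain m where m: "n = Suc m" using n by (cases n) auto
  have "cf_rem (wQ Q) n > 1" using X_gt1[OF Q, of m] qs_rem[OF Q, of n] m by simp
  thus ?thesis by (simp add: cf_digit_def le_floor_iff)
qed

lemma cd_pos:
  assumes Q: "Q \<in> Qplus" and p: "p > 0" "per (\<lambda>i. cf_digit (wQ Q) (2*k+i)) p"
  shows "\<forall>i. cf_digit (wQ Q) (2*k+i) \<ge> 1"
proof
  fix i
  have "cf_digit (wQ Q) (2*k+(i+p)) \<ge> 1" using digit_pos[OF Q] p(1) by simp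
  moreover have "cf_digit (wQ Q) (2*k+(i+p)) = cf_digit (wQ Q) (2*k+i)" using p(2) by (simp add: per_def)
  ultimately show "cf_digit (wQ Q) (2*k+i) \<ge> 1" by simp
qed

lemma part2:
  assumes Q: "Q \<in> Qplus" and v: "valid_preperiod (wQ Q) k"
  shows "primitive_word (Wword Q k)"
proof -
  obtain p where p: "p > 0" "per (\<lambda>i. cf_digit (wQ Q) (2*k+i)) p" using v valid_per by blast
  show ?thesis unfolding Wword_eq using blk_primitive[OF cd_pos[OF Q p] p] .
qed

lemma length_blk_ge2:
  assumes "\<forall>i. c i \<ge> 1" "P \<ge> 2"
  shows "length (blk c 0 P) \<ge> 2"
proof -
  have PP2: "2 + (P - 2) = P" using assms(2) by simp
  have "blk c 0 P = blk c 0 2 @ blk c 2 (P - 2)" using blk_add[of c 0 2 "P - 2", unfolded PP2] by (simp add: numeral_2_eq_2)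
  moreover have "length (blk c 0 2) = nat (c 0) + nat (c 1)" using length_blk2[of c 0] by simp
  moreover have "nat (c 0) \<ge> 1" "nat (c 1) \<ge> 1" using nat_mono[OF assms(1)[rule_format, of 0]] nat_mono[OF assms(1)[rule_format, of 1]] by simp_all
  ultimately show ?thesis by simp
qed

lemma Wword_len:
  assumes Q: "Q \<in> Qplus" and v: "valid_preperiod (wQ Q) k"
  shows "length (Wword Q k) \<ge> 2"
proof -
  obtain p where p: "p > 0" "per (\<lambda>i. cf_digit (wQ Q) (2*k+i)) p" using v valid_per by blast
  have "evp (\<lambda>i. cf_digit (wQ Q) (2*k+i)) \<ge> 2" using evp_props[OF p] by presburger
  thus ?thesis unfolding Wword_eq using length_blk_ge2[OF cd_pos[OF Q p]] by blast
qed

lemma part3: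
  assumes Q: "Q \<in> Qplus" and g: "g \<in> SL2Z" and v: "valid_preperiod (wQ Q) k"
    and v': "valid_preperiod (wQ (qact Q g)) k'"
  shows "cyc_equiv (Wword Q k) (Wword (qact Q g) k')"
proof -
  define x where "x = wQ Q"
  define x' where "x' = wQ (qact Q g)"
  obtain i j where ij: "cf_rem x i = cf_rem x' j" "even (i + j)"
    using rel_act[OF Q g] unfolding rel_def x_def x'_def by auto
  define c where "c t = cf_digit x (2*k+t)" for t
  define d where "d t = cf_digit x' (2*k'+t)" for t
  obtain pc where pc: "pc > 0" "per c pc" using v valid_per unfolding c_def x_def by blast
  obtain pd where pd: "pd > 0" "per d pd" using v' valid_per unfolding d_def x'_def by blast
  define P where "P = evp c"
  have P: "P > 0" "even P" "per c P" using evp_props[OF pc] by (auto simp: P_def)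
  define M where "M = (i + 2*k') * P"
  have MP: "M \<ge> i + 2*k'" using P(1) by (simp add: M_def)
  have Me: "even M" using P(2) by (simp add: M_def)
  define e where "e = j + 2*k + M - i - 2*k'"
  have ee: "e + i + 2*k' = j + 2*k + M" using MP by (simp add: e_def)
  have eev: "even e" using ee Me ij(2) by presburger
  have ceq: "c t = d (t + e)" for t
  proof -
    have "c t = c (t + (i + 2*k') * P)" using per_mult[OF P(3), of t "i + 2*k'"] by simp
    also have "\<dots> = \<lfloor>cf_rem x (2*k + (t + M))\<rfloor>" by (simp add: c_def cf_digit_def M_def)
    also have "2*k + (t + M) = i + (2*k + t + M - i)" using MP by simp
    also have "cf_rem x (i + (2*k + t + M - i)) = cf_rem x' (j + (2*k + t + M - i))" by (rule rem_shift[OF ij(1)])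
    also have "j + (2*k + t + M - i) = 2*k' + (t + e)" using MP ee by simp
    finally show ?thesis by (simp add: d_def cf_digit_def)
  qed
  have cfun: "c = (\<lambda>t. d (t + e))" using ceq by auto
  have "Wword Q k = blk c 0 (evp c)" unfolding Wword_eq c_def x_def ..
  moreover have "Wword (qact Q g) k' = blk d 0 (evp d)" unfolding Wword_eq d_def x'_def ..
  ultimately show ?thesis using W_shift[OF pd eev] cfun by simp
qed

lemma letter_neq_L: "(x \<noteq> L) = (x = R)" by (cases x) auto

lemma find_RL:
  assumes "L \<in> set w" "R \<in> set w"
  shows "\<exists>i<length w. w ! i = R \<and> w ! ((i + 1) mod length w) = L"
proof (rule ccontr)
  define n where "n = length w"
  assume "\<not> ?thesis"
  hence H: "\<And>i. i < n \<Longrightarrow> w ! i = R \<Longrightarrow> w ! ((i + 1) mod n) = R" by (auto simp: n_def letter_neq_L)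
  obtain j where j: "j < n" "w ! j = R" using assms(2) by (auto simp: n_def in_set_conv_nth)
  have n0: "n > 0" using j by simp
  have all: "w ! ((j + m) mod n) = R" for m
  proof (induction m)
    case 0 then show ?case using j by simp
  next
    case (Suc m)
    have "(j + Suc m) mod n = ((j + m) mod n + 1) mod n" by (simp add: mod_Suc_eq)
    moreover have "(j + m) mod n < n" using n0 by simp
    ultimately show ?case using H Suc by simp
  qed
  obtain p where p: "p < n" "w ! p = L" using assms(1) by (auto simp: n_def in_set_conv_nth)
  have "(j + (n - j + p)) mod n = p" using j p by simp
  hence "w ! p = R" using all[of "n - j + p"] by simp
  with p show False by simp
qed

lemma decomp:
  "xs \<noteq> [] \<Longrightarrow> hd xs = lt z \<Longrightarrow> \<exists>N c. N \<ge> 1 \<and> (\<forall>i. c i \<ge> 1) \<and> xs = blk c z N"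
proof (induction "length xs" arbitrary: xs z rule: less_induct)
  case less
  define x where "x = lt z"
  define tw where "tw = takeWhile (\<lambda>y. y = x) xs"
  define ys where "ys = dropWhile (\<lambda>y. y = x) xs"
  have xs: "xs = tw @ ys" by (simp add: tw_def ys_def)
  have "\<forall>y\<in>set tw. y = x" by (auto simp: tw_def dest: set_takeWhileD)
  hence twr: "tw = replicate (length tw) x" by (simp add: replicate_length_same)
  obtain y ys' where yy: "xs = y # ys'" using less.prems(1) by (cases xs) auto
  have "y = x" using less.prems(2) yy by (simp add: x_def)
  hence a1: "length tw \<ge> 1" by (simp add: tw_def yy)
  show ?case
  proof (cases "ys = []")
    case True
    have "xs = blk (\<lambda>_. int (length tw)) z 1" using xs twr True by (simp add: blk_Suc x_def)
    thus ?thesis by (intro exI[of _ 1] exI[of _ "\<lambda>_. int (length tw)"]) (use a1 in auto)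
  next
    case False
    have "hd ys \<noteq> x" using False hd_dropWhile[of "\<lambda>y. y = x" xs] by (simp add: ys_def)
    hence hy: "hd ys = lt (Suc z)" by (cases "hd ys") (auto simp: x_def lt_def split: if_splits)
    have "length xs = length tw + length ys" using xs by simp
    hence "length ys < length xs" using a1 by linarith
    then obtain N c where Nc: "N \<ge> 1" "\<forall>i. c i \<ge> 1" "ys = blk c (Suc z) N"
      using less.hyps False hy by blast
    define c' where "c' = c(z := int (length tw))"
    have "blk c' (Suc z) N = blk c (Suc z) N" by (rule blk_cong) (simp add: c'_def)
    hence "blk c' z (Suc N) = tw @ ys" using twr Nc(3) by (simp add: blk_Suc c'_def x_def)
    moreover have "\<forall>i. c' i \<ge> 1" using Nc(2) a1 by (simp add: c'_def)
    ultimately show ?thesis using xs by (intro exI[of _ "Suc N"] exI[of _ c']) auto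
  qed
qed

lemma concat_rep_single: "concat (replicate n [x]) = replicate n x"
  by (induction n) auto

lemma single_letter:
  assumes "primitive_word w" "\<forall>y\<in>set w. y = a"
  shows "w = [a]"
proof -
  have wr: "w = replicate (length w) a" using assms(2) by (simp add: replicate_length_same)
  have ne: "length w \<ge> 1" using assms(1) by (simp add: primitive_word_def Suc_le_eq)
  show ?thesis
  proof (cases "length w \<ge> 2")
    case True
    have "w = concat (replicate (length w) [a])" using wr by (simp add: concat_rep_single)
    with True assms(1) show ?thesis unfolding primitive_word_def by blast
  next
    case False
    hence "length w = 1" using ne by simp
    thus ?thesis using wr by (simp add: numeral_2_eq_2)
  qed
qed

lemma part4_back:
  assumes w: "primitive_word w" "\<not> cyc_equiv w [L]" "\<not> cyc_equiv w [R]"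
  shows "\<exists>Q\<in>Qplus. \<exists>k. valid_preperiod (wQ Q) k \<and> cyc_equiv (Wword Q k) w"
proof -
  have wne: "w \<noteq> []" using w(1) by (simp add: primitive_word_def)
  have "L \<in> set w"
  proof (rule ccontr)
    assume nL: "L \<notin> set w"
    have "\<forall>y\<in>set w. y = R"
    proof
      fix y assume "y \<in> set w"
      hence "y \<noteq> L" using nL by auto
      thus "y = R" by (cases y) auto
    qed
    hence "w = [R]" by (rule single_letter[OF w(1)])
    thus False using w(3) cyc_refl[of "[R]"] by simp
  qed
  moreover have "R \<in> set w"
  proof (rule ccontr)
    assume nR: "R \<notin> set w"
    have "\<forall>y\<in>set w. y = L"
    proof
      fix y assume "y \<in> set w"
      hence "y \<noteq> R" using nR by auto
      thus "y = L" by (cases y) auto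
    qed
    hence "w = [L]" by (rule single_letter[OF w(1)])
    thus False using w(2) cyc_refl[of "[L]"] by simp
  qed
  ultimately obtain i where i: "i < length w" "w ! i = R" "w ! ((i + 1) mod length w) = L"
    using find_RL by blast
  define w' where "w' = rotate (i + 1) w"
  have w'ne: "w' \<noteq> []" using wne by (simp add: w'_def)
  have lw': "length w' = length w" by (simp add: w'_def)
  have "w' ! 0 = w ! ((i + 1 + 0) mod length w)" unfolding w'_def by (rule nth_rotate) (use wne in simp)
  hence h0: "w' ! 0 = L" using i by simp
  have hl: "last w' = R"
  proof -
    have "last w' = w' ! (length w - 1)" using w'ne lw' by (simp add: last_conv_nth)
    also have "\<dots> = w ! ((i + 1 + (length w - 1)) mod length w)" unfolding w'_def by (rule nth_rotate) (use wne in simp)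
    also have "(i + 1 + (length w - 1)) mod length w = i"
    proof -
      have e: "i + 1 + (length w - 1) = i + length w" using i(1) by simp
      show ?thesis unfolding e using i(1) by simp
    qed
    finally show ?thesis using i(2) by simp
  qed
  have "hd w' = lt 0" using h0 w'ne by (simp add: hd_conv_nth lt_def)
  then obtain N c where Nc: "N \<ge> 1" "\<forall>i. c i \<ge> 1" "w' = blk c 0 N" using decomp[OF w'ne] by blast
  have "lt (0 + N - 1) = R" using blk_last[OF Nc(2), of N 0] Nc hl by simp
  hence Ne: "even N" using Nc(1) by (simp add: lt_def split: if_splits)
  have N2: "N \<ge> 2" using Nc(1) Ne by presburger
  have "cyc_equiv w w'" unfolding cyc_equiv_def w'_def by blast
  hence cw: "cyc_equiv w' w" by (rule cyc_sym)
  have pw': "primitive_word w'" using primitive_cyc[OF w(1) \<open>cyc_equiv w w'\<close>] .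
  obtain Q where Q: "Q \<in> Qplus" "\<forall>t. cf_digit (wQ Q) t = c (t mod N)" using construct[OF Nc(2) Ne N2] by blast
  define cc where "cc t = cf_digit (wQ Q) (2*0+t)" for t
  have cce: "cc t = c (t mod N)" for t using Q(2) by (simp add: cc_def)
  have pcc: "per cc N" unfolding per_def cce by simp
  have N0: "N > 0" using N2 by simp
  have ccf: "(\<lambda>i. cf_digit (wQ Q) (2*0+i)) = cc" by (simp add: cc_def fun_eq_iff)
  have v: "valid_preperiod (wQ Q) 0" unfolding valid_per ccf using pcc N0 by blast
  have ccpos: "\<forall>i. cc i \<ge> 1" using Nc(2) cce by simp
  have bw: "blk cc 0 N = w'"
  proof -
    have "blk cc 0 N = blk c 0 N" by (rule blk_cong) (simp add: cce)
    thus ?thesis using Nc(3) by simp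
  qed
  define E where "E = evp cc"
  have E: "E > 0" "even E" "per cc E" using evp_props[OF N0 pcc] by (auto simp: E_def)
  have "E dvd N" unfolding E_def by (rule evp_dvd[OF N0 pcc Ne])
  then obtain r where r0: "N = E * r" by (rule dvdE)
  hence r: "N = r * E" by (simp add: mult.commute)
  have "r \<noteq> 0" using r N0 by auto
  have "r = 1"
  proof (rule ccontr)
    assume "r \<noteq> 1"
    hence "r \<ge> 2" using \<open>r \<noteq> 0\<close> by simp
    moreover have "w' = concat (replicate r (blk cc 0 E))" using blk_power[OF E(3) E(2), of r] bw r by simp
    ultimately show False using pw' by (auto simp: primitive_word_def)
  qed
  hence "E = N" using r by simp
  hence "Wword Q 0 = w'" unfolding Wword_eq ccf using bw by (simp add: E_def)
  thus ?thesis using Q(1) v cw by blast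
qed

theorem lemma2p4:
  shows "(\<forall>Q\<in>Qplus. \<exists>k. valid_preperiod (wQ Q) k)
    \<and> (\<forall>Q\<in>Qplus. \<forall>k. valid_preperiod (wQ Q) k \<longrightarrow> primitive_word (Wword Q k))
    \<and> (\<forall>Q\<in>Qplus. \<forall>g\<in>SL2Z. \<forall>k k'. valid_preperiod (wQ Q) k \<longrightarrow>
          valid_preperiod (wQ (qact Q g)) k' \<longrightarrow> cyc_equiv (Wword Q k) (Wword (qact Q g) k'))
    \<and> (\<forall>w. (\<exists>Q\<in>Qplus. \<exists>k. valid_preperiod (wQ Q) k \<and> cyc_equiv (Wword Q k) w) \<longleftrightarrow>
          (primitive_word w \<and> \<not> cyc_equiv w [L] \<and> \<not> cyc_equiv w [R]))"
proof -
  have p1: "\<forall>Q\<in>Qplus. \<exists>k. valid_preperiod (wQ Q) k" using lagrange by blast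
  have p2: "\<forall>Q\<in>Qplus. \<forall>k. valid_preperiod (wQ Q) k \<longrightarrow> primitive_word (Wword Q k)" using part2 by blast
  have p3: "\<forall>Q\<in>Qplus. \<forall>g\<in>SL2Z. \<forall>k k'. valid_preperiod (wQ Q) k \<longrightarrow>
          valid_preperiod (wQ (qact Q g)) k' \<longrightarrow> cyc_equiv (Wword Q k) (Wword (qact Q g) k')"
    using part3 by blast
  have p4: "(\<exists>Q\<in>Qplus. \<exists>k. valid_preperiod (wQ Q) k \<and> cyc_equiv (Wword Q k) w) \<longleftrightarrow>
          (primitive_word w \<and> \<not> cyc_equiv w [L] \<and> \<not> cyc_equiv w [R])" for w
  proof
    assume "\<exists>Q\<in>Qplus. \<exists>k. valid_preperiod (wQ Q) k \<and> cyc_equiv (Wword Q k) w"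
    then obtain Q k where Q: "Q \<in> Qplus" "valid_preperiod (wQ Q) k" "cyc_equiv (Wword Q k) w" by blast
    have a: "primitive_word w" using primitive_cyc[OF part2[OF Q(1,2)] Q(3)] .
    have "length w \<ge> 2" using Wword_len[OF Q(1,2)] cyc_length[OF Q(3)] by simp
    hence "\<not> cyc_equiv w [L]" "\<not> cyc_equiv w [R]" using cyc_length by fastforce+
    with a show "primitive_word w \<and> \<not> cyc_equiv w [L] \<and> \<not> cyc_equiv w [R]" by blast
  next
    assume "primitive_word w \<and> \<not> cyc_equiv w [L] \<and> \<not> cyc_equiv w [R]"
    thus "\<exists>Q\<in>Qplus. \<exists>k. valid_preperiod (wQ Q) k \<and> cyc_equiv (Wword Q k) w"
      using part4_back by blast
  qed
  show ?thesis using p1 p2 p3 p4 by blast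
qed

end
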